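(* There is a constant $c$ such that for every $n\ge 1$ and every $\epsilon>0$ there is a quantum algorithm that $\epsilon$-tests the orthogonal group $\mathbb{O}_N$ (with $N=2^n$) using at most $c/\epsilon^2$ queries to $U$; i.e. the query complexity is $O(1/\epsilon^2)$, independent of $N$.
   Context: Let $n\ge1$, $N=2^n$, $\mathbb{M}_{N,N}$ the complex $N\times N$ matrices and $\mathbb{U}_N$ the unitary ones. $\|A\|=\sqrt{\mathrm{tr}(A^\dagger A)}$; $D(A,B)=\min_{\theta\in[0,2\pi)}\frac{1}{\sqrt{2N}}\|e^{i\theta}A-B\|$; $D(A,\mathcal{S})=\inf_{B\in\mathcal{S}}D(A,B)$. For $\mathcal{S}\subseteq\mathbb{U}_N$, $U\in\mathbb{U}_N$ has property $\mathcal{S}$ if $U=e^{i\theta}V$ for some $V\in\mathcal{S}$ and real $\theta$, and $U$ is $\epsilon$-far from $\mathcal{S}$ if $D(U,V)\ge\epsilon$ for all $V\in\mathcal{S}$. Testing model: an unknown $U\in\mathbb{U}_N$ is given as a black box; an algorithm may prepare arbitrary states on the $N$-dimensional system together with an ancilla, apply $U\otimes I$ (one query each time) interleaved with arbitrary fixed quantum operations, and measure. An algorithm $\epsilon$-tests $\mathcal{S}$ if for every $U\in\mathbb{U}_N$ it accepts with probability at least $2/3$ whenever $U$ has property $\mathcal{S}$ and with probability at most $1/3$ whenever $U$ is $\epsilon$-far from $\mathcal{S}$; its query complexity is the number of queries made. $\mathbb{O}_N=\{U\in\mathbb{U}_N: UU^T=U^TU=I\}$. *)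

theory Defs
  imports Complex_Main "Jordan_Normal_Form.Matrix"
begin

definition adj :: "complex mat \<Rightarrow> complex mat" where
  "adj A = mat (dim_col A) (dim_row A) (\<lambda>(i,j). cnj (A $$ (j,i)))"

definition unitary_mat :: "nat \<Rightarrow> complex mat \<Rightarrow> bool" where
  "unitary_mat N U \<longleftrightarrow> U \<in> carrier_mat N N \<and> U * adj U = 1\<^sub>m N \<and> adj U * U = 1\<^sub>m N"

definition orth_group :: "nat \<Rightarrow> complex mat set" where
  "orth_group N = {U. unitary_mat N U \<and> U * transpose_mat U = 1\<^sub>m N \<and> transpose_mat U * U = 1\<^sub>m N}"

definition fnorm :: "complex mat \<Rightarrow> real" where
  "fnorm A = sqrt (\<Sum>i<dim_row A. \<Sum>j<dim_col A. (cmod (A $$ (i,j)))\<^sup>2)"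

definition Dist :: "nat \<Rightarrow> complex mat \<Rightarrow> complex mat \<Rightarrow> real" where
  "Dist N A B = (INF \<theta>\<in>{0..<2*pi}. fnorm (exp (\<i> * complex_of_real \<theta>) \<cdot>\<^sub>m A - B) / sqrt (2 * real N))"

definition has_property :: "nat \<Rightarrow> complex mat set \<Rightarrow> complex mat \<Rightarrow> bool" where
  "has_property N S U \<longleftrightarrow> (\<exists>V\<in>S. \<exists>\<theta>::real. U = exp (\<i> * complex_of_real \<theta>) \<cdot>\<^sub>m V)"

definition eps_far :: "nat \<Rightarrow> real \<Rightarrow> complex mat set \<Rightarrow> complex mat \<Rightarrow> bool" where
  "eps_far N \<epsilon> S U \<longleftrightarrow> (\<forall>V\<in>S. Dist N U V \<ge> \<epsilon>)"

text \<open>Kronecker product A (x) B (index (i,k) of A(x)B is i * dim B + k).\<close>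
definition kron :: "complex mat \<Rightarrow> complex mat \<Rightarrow> complex mat" where
  "kron A B = mat (dim_row A * dim_row B) (dim_col A * dim_col B)
     (\<lambda>(i,j). A $$ (i div dim_row B, j div dim_col B) * B $$ (i mod dim_row B, j mod dim_col B))"

definition vnorm2 :: "complex vec \<Rightarrow> real" where
  "vnorm2 v = (\<Sum>i<dim_vec v. (cmod (v $ i))\<^sup>2)"

text \<open>A query algorithm (in purified form): number of queries q, ancilla dimension M,
  initial pure state psi0 on C^N (x) C^M, fixed unitaries V_0..V_q on C^N (x) C^M
  interleaved with the q queries U (x) I_M, and a final two-outcome projective measurement
  whose "accept" projector is P.\<close>
record qalg =
  nqueries :: nat
  anc_dim :: nat
  init_state :: "complex vec"
  ops :: "nat \<Rightarrow> complex mat"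
  acc_proj :: "complex mat"

definition valid_qalg :: "nat \<Rightarrow> qalg \<Rightarrow> bool" where
  "valid_qalg N A \<longleftrightarrow>
     anc_dim A \<ge> 1 \<and>
     init_state A \<in> carrier_vec (N * anc_dim A) \<and> vnorm2 (init_state A) = 1 \<and>
     (\<forall>k\<le>nqueries A. unitary_mat (N * anc_dim A) (ops A k)) \<and>
     acc_proj A \<in> carrier_mat (N * anc_dim A) (N * anc_dim A) \<and>
     acc_proj A * acc_proj A = acc_proj A \<and> adj (acc_proj A) = acc_proj A"

fun run_state :: "qalg \<Rightarrow> complex mat \<Rightarrow> nat \<Rightarrow> complex vec" where
  "run_state A U 0 = ops A 0 *\<^sub>v init_state A"
| "run_state A U (Suc k) = ops A (Suc k) *\<^sub>v (kron U (1\<^sub>m (anc_dim A)) *\<^sub>v run_state A U k)"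

definition accept_prob :: "qalg \<Rightarrow> complex mat \<Rightarrow> real" where
  "accept_prob A U = vnorm2 (acc_proj A *\<^sub>v run_state A U (nqueries A))"

definition eps_tests :: "nat \<Rightarrow> real \<Rightarrow> complex mat set \<Rightarrow> qalg \<Rightarrow> bool" where
  "eps_tests N \<epsilon> S A \<longleftrightarrow> valid_qalg N A \<and>
     (\<forall>U. unitary_mat N U \<longrightarrow>
        (has_property N S U \<longrightarrow> accept_prob A U \<ge> 2/3) \<and>
        (eps_far N \<epsilon> S U \<longrightarrow> accept_prob A U \<le> 1/3))"

end

theory Submission
  imports Defs "HOL-Analysis.Analysis" "Jordan_Normal_Form.Determinant"
begin


lemma compact_box_fun:
  fixes P :: "'i \<Rightarrow> bool"
  shows "compact (PiE UNIV (\<lambda>i. if P i then {-1..1} else {0::real}))"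
proof -
  have "compactin (product_topology (\<lambda>i. euclidean) UNIV) (PiE UNIV (\<lambda>i. if P i then {-1..1} else {0::real}))"
    by (subst compactin_PiE) auto
  then show ?thesis by (simp add: euclidean_product_topology compactin_euclidean_iff)
qed

definition trr :: "nat \<Rightarrow> real mat \<Rightarrow> real" where
  "trr n M = (\<Sum>i<n. M $$ (i,i))"

lemma trr_tA:
  assumes "W \<in> carrier_mat N N" "A \<in> carrier_mat N N"
  shows "trr N (transpose_mat W * A) = (\<Sum>i<N. \<Sum>a<N. W $$ (a,i) * A $$ (a,i))"
  using assms unfolding trr_def
  by (intro sum.cong refl) (auto simp: scalar_prod_def atLeast0LessThan)

lemma tWW:
  assumes "W \<in> carrier_mat N N" "i < N" "j < N"
  shows "(transpose_mat W * W) $$ (i,j) = (\<Sum>a<N. W $$ (a,i) * W $$ (a,j))"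
  using assms by (auto simp: scalar_prod_def atLeast0LessThan)

lemma closed_imp_const: "closed {x. Q x} \<Longrightarrow> closed {x. C \<longrightarrow> Q x}"
  by (cases C) auto

lemma exists_max_orth:
  assumes A: "A \<in> carrier_mat N N"
  shows "\<exists>V\<in>carrier_mat N N. transpose_mat V * V = 1\<^sub>m N \<and>
    (\<forall>W\<in>carrier_mat N N. transpose_mat W * W = 1\<^sub>m N \<longrightarrow>
        trr N (transpose_mat W * A) \<le> trr N (transpose_mat V * A))"
proof -
  define F where "F = {g::nat\<times>nat\<Rightarrow>real. (\<forall>p. \<not>(fst p<N \<and> snd p<N) \<longrightarrow> g p = 0) \<and>
     (\<forall>i j. i<N \<and> j<N \<longrightarrow> (\<Sum>a<N. g(a,i)*g(a,j)) = (if i=j then 1 else 0))}"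
  define obj where "obj g = (\<Sum>i<N. \<Sum>a<N. g(a,i) * A$$(a,i))" for g :: "nat\<times>nat\<Rightarrow>real"
  define fom where "fom W = (\<lambda>(i,j). if i<N \<and> j<N then W$$(i,j) else (0::real))" for W
  define Box where "Box = PiE UNIV (\<lambda>p::nat\<times>nat. if fst p<N \<and> snd p<N then {-1..1} else {0::real})"
  have fomF: "fom W \<in> F \<and> obj (fom W) = trr N (transpose_mat W * A)"
    if W: "W \<in> carrier_mat N N" "transpose_mat W * W = 1\<^sub>m N" for W
  proof
    show "fom W \<in> F" unfolding F_def
    proof (intro CollectI conjI allI impI)
      fix p assume "\<not>(fst p<N \<and> snd p<N)" then show "fom W p = 0" by (cases p) (auto simp: fom_def)
    next
      fix i j assume ij: "i<N \<and> j<N"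
      have "(\<Sum>a<N. fom W (a,i)*fom W (a,j)) = (transpose_mat W * W) $$ (i,j)"
        using ij W by (subst tWW) (auto simp: fom_def)
      then show "(\<Sum>a<N. fom W (a,i)*fom W (a,j)) = (if i=j then 1 else 0)" using W ij by simp
    qed
    show "obj (fom W) = trr N (transpose_mat W * A)"
      using W A by (simp add: trr_tA obj_def fom_def)
  qed
  have Fsub: "F \<subseteq> Box"
  proof
    fix g assume g: "g \<in> F"
    show "g \<in> Box" unfolding Box_def
    proof (intro PiE_I)
      fix p :: "nat\<times>nat"
      obtain a i where p: "p = (a,i)" by (cases p)
      show "g p \<in> (if fst p<N \<and> snd p<N then {-1..1} else {0})"
      proof (cases "a<N \<and> i<N")
        case True
        have "(g(a,i))^2 \<le> (\<Sum>b<N. g(b,i)*g(b,i))"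
          using True by (subst power2_eq_square, intro member_le_sum) auto
        also have "\<dots> = 1" using g True unfolding F_def by auto
        finally have "\<bar>g(a,i)\<bar> \<le> 1" by (simp add: abs_square_le_1)
        then show ?thesis using True p by auto
      next
        case False then show ?thesis using g p unfolding F_def by auto
      qed
    qed simp
  qed
  have clF: "closed F" unfolding F_def
    by (intro closed_Collect_conj closed_Collect_all closed_imp_const closed_Collect_eq
          continuous_intros) auto
  have cF: "compact F"
  proof -
    have "compact (Box \<inter> F)" unfolding Box_def by (intro compact_Int_closed compact_box_fun clF)
    moreover have "Box \<inter> F = F" using Fsub by auto
    ultimately show ?thesis by simp
  qed
  have neF: "F \<noteq> {}" using fomF[of "1\<^sub>m N"] by auto
  have cobj: "continuous_on F obj" unfolding obj_def by (intro continuous_intros continuous_on_subset[OF continuous_on_product_coordinates]) auto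
  obtain g where gF: "g \<in> F" and gmax: "\<And>h. h \<in> F \<Longrightarrow> obj h \<le> obj g"
    using continuous_attains_sup[OF cF neF cobj] by blast
  define V where "V = Matrix.mat N N g"
  have V: "V \<in> carrier_mat N N" unfolding V_def by simp
  have VV: "transpose_mat V * V = 1\<^sub>m N"
  proof (rule eq_matI)
    fix i j assume "i < dim_row (1\<^sub>m N)" "j < dim_col (1\<^sub>m N)"
    then have ij: "i<N" "j<N" by auto
    have "(transpose_mat V * V) $$ (i,j) = (\<Sum>a<N. g(a,i)*g(a,j))"
      using ij V by (subst tWW) (auto simp: V_def)
    also have "\<dots> = (if i=j then 1 else 0)" using gF ij unfolding F_def by auto
    finally show "(transpose_mat V * V) $$ (i,j) = 1\<^sub>m N $$ (i,j)" using ij by simp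
  qed (use V in auto)
  have "fom V = g"
  proof
    fix p show "fom V p = g p" using gF unfolding F_def fom_def V_def by (cases p) auto
  qed
  then have objV: "obj g = trr N (transpose_mat V * A)" using fomF[OF V VV] by simp
  show ?thesis
  proof (intro bexI[OF _ V] conjI VV ballI impI)
    fix W :: "real mat" assume W: "W \<in> carrier_mat N N" "transpose_mat W * W = 1\<^sub>m N"
    show "trr N (transpose_mat W * A) \<le> trr N (transpose_mat V * A)"
      using fomF[OF W] gmax objV by metis
  qed
qed



lemma tH_entry:
  assumes "H \<in> carrier_mat N N" "S \<in> carrier_mat N N"
  shows "trr N (transpose_mat H * S) = (\<Sum>i<N. \<Sum>a<N. H $$ (a,i) * S $$ (a,i))"
  using trr_tA[OF assms] .

lemma delta_mult: "(if r = i then (1::'a::comm_ring_1) else 0) * (if r = j then 1 else 0) = (if r = i then (if i = j then 1 else 0) else 0)"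
  by auto

lemma householder_orth:
  fixes x :: "nat \<Rightarrow> real"
  assumes c: "c * (\<Sum>r<N. x r * x r) = 2"
  defines "H \<equiv> Matrix.mat N N (\<lambda>(a,b). (if a = b then 1 else 0) - c * x a * x b)"
  shows "transpose_mat H * H = 1\<^sub>m N"
proof (rule eq_matI)
  fix i j assume "i < dim_row (1\<^sub>m N)" "j < dim_col (1\<^sub>m N)"
  then have ij: "i<N" "j<N" by auto
  have H: "H \<in> carrier_mat N N" unfolding H_def by simp
  have "(transpose_mat H * H) $$ (i,j) = (\<Sum>r<N. H $$ (r,i) * H $$ (r,j))" using tWW[OF H ij] .
  also have "\<dots> = (\<Sum>r<N. ((if r = i then 1 else 0) - c * x r * x i) * ((if r = j then 1 else 0) - c * x r * x j))"
    using ij by (intro sum.cong refl) (auto simp: H_def)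
  also have "\<dots> = (\<Sum>r<N. (if r = i then 1 else 0) * (if r = j then 1 else 0))
      - (\<Sum>r<N. (if r = i then c * x r * x j else 0)) - (\<Sum>r<N. (if r = j then c * x r * x i else 0))
      + c * c * x i * x j * (\<Sum>r<N. x r * x r)"
  proof -
    have "\<And>r. ((if r = i then 1 else 0) - c * x r * x i) * ((if r = j then 1 else 0) - c * x r * x j)
      = (if r = i then 1 else 0) * (if r = j then 1 else 0) - (if r = i then c * x r * x j else 0)
        - (if r = j then c * x r * x i else 0) + c * c * x i * x j * (x r * x r)"
      by (auto simp: algebra_simps)
    then show ?thesis by (simp only: sum.distrib sum_subtractf sum_distrib_left[symmetric])
  qed
  also have "\<dots> = (if i = j then 1 else 0) - 2 * c * x i * x j + c * x i * x j * (c * (\<Sum>r<N. x r * x r))"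
    using ij by (simp add: delta_mult sum.delta algebra_simps)
  also have "\<dots> = (if i = j then 1 else 0)" using c by simp
  finally show "(transpose_mat H * H) $$ (i,j) = 1\<^sub>m N $$ (i,j)" using ij by simp
qed (auto simp: H_def)

lemma psd_from_max:
  fixes S :: "real mat"
  assumes S: "S \<in> carrier_mat N N"
    and opt: "\<forall>H\<in>carrier_mat N N. transpose_mat H * H = 1\<^sub>m N \<longrightarrow> trr N (transpose_mat H * S) \<le> trr N S"
  shows "(\<Sum>a<N. \<Sum>b<N. x a * S $$ (a,b) * x b) \<ge> 0"
proof (cases "(\<Sum>r<N. x r * x r) = 0")
  case True
  then have "\<forall>r\<in>{..<N}. x r * x r = 0" using sum_nonneg_eq_0_iff[of "{..<N}" "\<lambda>r. x r * x r"] by auto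
  then have "\<forall>r<N. x r = 0" by auto
  then show ?thesis by simp
next
  case False
  define q where "q = (\<Sum>r<N. x r * x r)"
  have "q \<ge> 0" unfolding q_def by (intro sum_nonneg) auto
  then have qpos: "q > 0" using False unfolding q_def by linarith
  define c where "c = 2 / q"
  have c: "c * (\<Sum>r<N. x r * x r) = 2" using qpos unfolding c_def q_def by simp
  define H where "H = Matrix.mat N N (\<lambda>(a,b). (if a = b then 1 else 0) - c * x a * x b)"
  have H: "H \<in> carrier_mat N N" unfolding H_def by simp
  have HH: "transpose_mat H * H = 1\<^sub>m N" unfolding H_def by (rule householder_orth[OF c])
  have "trr N (transpose_mat H * S) = (\<Sum>i<N. \<Sum>a<N. H $$ (a,i) * S $$ (a,i))"
    using tH_entry[OF H S] .
  also have "\<dots> = (\<Sum>i<N. \<Sum>a<N. (if a = i then S $$ (a,i) else 0) - c * (x a * S $$ (a,i) * x i))"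
    apply (intro sum.cong refl)
    apply (simp add: H_def)
    apply (simp add: algebra_simps)
    done
  also have "\<dots> = trr N S - c * (\<Sum>i<N. \<Sum>a<N. x a * S $$ (a,i) * x i)"
    by (simp add: sum_subtractf sum_distrib_left trr_def sum.delta)
  also have "(\<Sum>i<N. \<Sum>a<N. x a * S $$ (a,i) * x i) = (\<Sum>a<N. \<Sum>b<N. x a * S $$ (a,b) * x b)"
    by (rule sum.swap)
  finally have "trr N S - c * (\<Sum>a<N. \<Sum>b<N. x a * S $$ (a,b) * x b) \<le> trr N S"
    using opt H HH by auto
  moreover have "c > 0" using qpos unfolding c_def by simp
  ultimately show ?thesis by (simp add: zero_le_mult_iff)
qed

lemma sum_split_two:
  assumes "i < (N::nat)" "j < N" "i \<noteq> j"
  shows "(\<Sum>r<N. f r) = f i + f j + (\<Sum>r\<in>{..<N}-{i,j}. f r)"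
proof -
  have "(\<Sum>r<N. f r) = sum f ({..<N}-{i,j}) + sum f {i,j}"
    using sum.subset_diff[of "{i,j}" "{..<N}" f] assms by auto
  then show ?thesis using assms by (simp add: ac_simps)
qed

definition givens :: "nat \<Rightarrow> nat \<Rightarrow> nat \<Rightarrow> real \<Rightarrow> real \<Rightarrow> real mat" where
  "givens N i j c s = Matrix.mat N N (\<lambda>(a,b). if a = b then (if a = i \<or> a = j then c else 1)
      else if a = j \<and> b = i then s else if a = i \<and> b = j then -s else 0)"

lemma givens_orth:
  assumes ij: "i < N" "j < N" "i \<noteq> j" and cs: "c * c + s * s = 1"
  shows "transpose_mat (givens N i j c s) * givens N i j c s = 1\<^sub>m N"
proof (rule eq_matI)
  define G where "G = givens N i j c s"
  have G: "G \<in> carrier_mat N N" unfolding G_def givens_def by simp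
  fix p q assume "p < dim_row (1\<^sub>m N)" "q < dim_col (1\<^sub>m N)"
  then have pq: "p<N" "q<N" by auto
  have rest: "(\<Sum>r\<in>{..<N}-{i,j}. G $$ (r,p) * G $$ (r,q)) = (if p = q \<and> p \<notin> {i,j} then 1 else 0)"
  proof -
    have "(\<Sum>r\<in>{..<N}-{i,j}. G $$ (r,p) * G $$ (r,q)) =
        (\<Sum>r\<in>{..<N}-{i,j}. (if r = p then (if p = q then 1 else 0) else 0))"
      using pq by (intro sum.cong refl) (auto simp: G_def givens_def)
    also have "\<dots> = (if p = q \<and> p \<notin> {i,j} then 1 else 0)" using pq by (simp add: sum.delta)
    finally show ?thesis .
  qed
  have "(transpose_mat G * G) $$ (p,q) = (\<Sum>r<N. G $$ (r,p) * G $$ (r,q))" using tWW[OF G pq] .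
  also have "\<dots> = G $$ (i,p) * G $$ (i,q) + G $$ (j,p) * G $$ (j,q) + (if p = q \<and> p \<notin> {i,j} then 1 else 0)"
    using sum_split_two[OF ij, of "\<lambda>r. G $$ (r,p) * G $$ (r,q)"] rest by simp
  also have "\<dots> = (if p = q then 1 else 0)"
    using pq ij cs by (auto simp: G_def givens_def algebra_simps)
  finally show "(transpose_mat (givens N i j c s) * givens N i j c s) $$ (p,q) = 1\<^sub>m N $$ (p,q)"
    using pq unfolding G_def by simp
qed (auto simp: givens_def)

lemma givens_trace:
  fixes S :: "real mat"
  assumes S: "S \<in> carrier_mat N N" and ij: "i < N" "j < N" "i \<noteq> j"
  shows "trr N (transpose_mat (givens N i j c s) * S) =
     trr N S + (c - 1) * (S $$ (i,i) + S $$ (j,j)) + s * (S $$ (j,i) - S $$ (i,j))"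
proof -
  define G where "G = givens N i j c s"
  have G: "G \<in> carrier_mat N N" unfolding G_def givens_def by simp
  have "trr N (transpose_mat G * S) = (\<Sum>b<N. \<Sum>a<N. G $$ (a,b) * S $$ (a,b))" using tH_entry[OF G S] .
  also have "\<dots> = (\<Sum>b<N. \<Sum>a<N. (if a = b then S $$ (a,b) else 0)
     + (if a = i then (if b = i then (c - 1) * S $$ (a,b) else 0) else 0)
     + (if a = j then (if b = j then (c - 1) * S $$ (a,b) else 0) else 0)
     + (if a = j then (if b = i then s * S $$ (a,b) else 0) else 0)
     + (if a = i then (if b = j then - s * S $$ (a,b) else 0) else 0))"
    using ij by (intro sum.cong refl) (auto simp: G_def givens_def algebra_simps)
  also have "\<dots> = trr N S + (c - 1) * (S $$ (i,i) + S $$ (j,j)) + s * (S $$ (j,i) - S $$ (i,j))"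
    using ij by (simp add: sum.distrib sum.delta trr_def algebra_simps)
  finally show ?thesis unfolding G_def .
qed

lemma sym_from_max:
  fixes S :: "real mat"
  assumes S: "S \<in> carrier_mat N N"
    and opt: "\<forall>H\<in>carrier_mat N N. transpose_mat H * H = 1\<^sub>m N \<longrightarrow> trr N (transpose_mat H * S) \<le> trr N S"
    and ij: "i < N" "j < N"
  shows "S $$ (i,j) = S $$ (j,i)"
proof (cases "i = j")
  case False
  have key: "(c - 1) * (S $$ (i,i) + S $$ (j,j)) + s * (S $$ (j,i) - S $$ (i,j)) \<le> 0"
    if cs: "c * c + s * s = 1" for c s
  proof -
    have "givens N i j c s \<in> carrier_mat N N" unfolding givens_def by simp
    then have "trr N (transpose_mat (givens N i j c s) * S) \<le> trr N S"
      using opt givens_orth[OF ij False cs] by auto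
    then show ?thesis using givens_trace[OF S ij False, of c s] by simp
  qed
  define d where "d = S $$ (j,i) - S $$ (i,j)"
  define T where "T = S $$ (i,i) + S $$ (j,j)"
  define m where "m = \<bar>T\<bar> + 1"
  define x where "x = d / (2 * m)"
  have m: "m > 0" "\<bar>T\<bar> < m" unfolding m_def by auto
  define c where "c = (1 - x^2) / (1 + x^2)"
  define s where "s = 2 * x / (1 + x^2)"
  have pos: "1 + x^2 > 0" by (simp add: add_pos_nonneg)
  have e: "(1 - x^2)^2 + (2*x)^2 = (1+x^2)^2" by (simp add: power2_eq_square algebra_simps)
  have "c^2 + s^2 = ((1 - x^2)^2 + (2*x)^2) / (1+x^2)^2"
    unfolding c_def s_def by (simp add: power_divide add_divide_distrib)
  also have "\<dots> = 1" using e pos by simp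
  finally have cs: "c * c + s * s = 1" by (simp add: power2_eq_square)
  have "(c - 1) * T + s * d \<le> 0" using key[OF cs] unfolding T_def d_def by simp
  moreover have c1: "(c - 1) * (1 + x^2) = - 2 * x^2" unfolding c_def using pos by (simp add: field_simps)
  moreover have s1: "s * (1 + x^2) = 2 * x" unfolding s_def using pos by simp
  ultimately have "(1 + x^2) * ((c - 1) * T + s * d) \<le> 0" using pos by (simp add: mult_nonneg_nonpos)
  moreover have "(1 + x^2) * ((c - 1) * T + s * d) = ((c - 1) * (1 + x^2)) * T + (s * (1 + x^2)) * d"
    by (simp add: algebra_simps)
  moreover have "\<dots> = - 2 * x^2 * T + 2 * x * d" unfolding c1 s1 by simp
  ultimately have h: "x * d \<le> x^2 * T" by simp
  show ?thesis
  proof (rule ccontr)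
    assume ne: "S $$ (i,j) \<noteq> S $$ (j,i)"
    then have D: "d^2 > 0" unfolding d_def by simp
    have xd: "x * d = d^2 / (2 * m)" unfolding x_def by (simp add: power2_eq_square)
    have "x^2 * T \<le> x^2 * \<bar>T\<bar>" by (intro mult_left_mono) auto
    also have "\<dots> \<le> x^2 * m" using m by (intro mult_left_mono) auto
    also have "\<dots> = d^2 / (4 * m)" unfolding x_def using m by (simp add: power2_eq_square field_simps)
    also have "\<dots> < d^2 / (2 * m)" using m D by (simp add: frac_less2)
    finally show False using h xd by simp
  qed
qed simp



declare minus_carrier_mat[simp]

lemma trr_comm:
  fixes M K :: "'a::comm_ring_1 mat"
  assumes "M \<in> carrier_mat n m" "K \<in> carrier_mat m n"
  shows "(\<Sum>i<n. (M * K) $$ (i,i)) = (\<Sum>i<m. (K * M) $$ (i,i))"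
proof -
  have "(\<Sum>i<n. (M * K) $$ (i,i)) = (\<Sum>i<n. \<Sum>k<m. M $$ (i,k) * K $$ (k,i))"
    using assms by (intro sum.cong refl) (auto simp: scalar_prod_def atLeast0LessThan)
  also have "\<dots> = (\<Sum>k<m. \<Sum>i<n. K $$ (k,i) * M $$ (i,k))"
    by (subst sum.swap) (simp add: mult.commute)
  also have "\<dots> = (\<Sum>i<m. (K * M) $$ (i,i))"
    using assms by (intro sum.cong refl) (auto simp: scalar_prod_def atLeast0LessThan)
  finally show ?thesis .
qed

lemma trr_comm': "M \<in> carrier_mat n m \<Longrightarrow> K \<in> carrier_mat m n \<Longrightarrow> trr n (M * K) = trr m (K * M)"
  unfolding trr_def by (rule trr_comm)

lemma trr_add: "M \<in> carrier_mat n n \<Longrightarrow> K \<in> carrier_mat n n \<Longrightarrow> trr n (M + K) = trr n M + trr n K"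
  unfolding trr_def by (simp add: sum.distrib)

lemma trr_minus: "M \<in> carrier_mat n n \<Longrightarrow> K \<in> carrier_mat n n \<Longrightarrow> trr n (M - K) = trr n M - trr n K"
  unfolding trr_def by (simp add: sum_subtractf)

lemma trr_one: "trr n (1\<^sub>m n) = real n"
  unfolding trr_def by simp

lemma psd_trace:
  fixes S Y :: "real mat"
  assumes S: "S \<in> carrier_mat N N" and Y: "Y \<in> carrier_mat N m"
    and psd: "\<And>x. (\<Sum>a<N. \<Sum>b<N. x a * S $$ (a,b) * x b) \<ge> 0"
  shows "trr m (transpose_mat Y * S * Y) \<ge> 0"
proof -
  have "trr m (transpose_mat Y * S * Y) = (\<Sum>i<m. \<Sum>a<N. \<Sum>b<N. Y $$ (a,i) * S $$ (a,b) * Y $$ (b,i))"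
    unfolding trr_def
  proof (intro sum.cong refl)
    fix i assume i: "i \<in> {..<m}"
    have "(transpose_mat Y * S * Y) $$ (i,i) = (\<Sum>a<N. Y $$ (a,i) * (\<Sum>b<N. S $$ (a,b) * Y $$ (b,i)))"
      using i S Y by (auto simp: scalar_prod_def atLeast0LessThan)
    also have "\<dots> = (\<Sum>a<N. \<Sum>b<N. Y $$ (a,i) * S $$ (a,b) * Y $$ (b,i))"
      by (simp add: sum_distrib_left mult.assoc)
    finally show "(transpose_mat Y * S * Y) $$ (i,i) = (\<Sum>a<N. \<Sum>b<N. Y $$ (a,i) * S $$ (a,b) * Y $$ (b,i))" .
  qed
  also have "\<dots> \<ge> 0"
  proof (rule sum_nonneg)
    fix i show "0 \<le> (\<Sum>a<N. \<Sum>b<N. Y $$ (a,i) * S $$ (a,b) * Y $$ (b,i))"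
      using psd[of "\<lambda>a. Y $$ (a,i)"] by simp
  qed
  finally show ?thesis .
qed

lemma key_trace:
  fixes S B :: "real mat"
  assumes S: "S \<in> carrier_mat N N" and B: "B \<in> carrier_mat N N"
    and sym: "transpose_mat S = S"
    and psd: "\<And>x. (\<Sum>a<N. \<Sum>b<N. x a * S $$ (a,b) * x b) \<ge> 0"
    and SB: "S * S + transpose_mat B * B = 1\<^sub>m N"
  shows "trr N (S * S) \<le> trr N S"
proof -
  have SS: "S * S \<in> carrier_mat N N" using S by simp
  have SSS: "S * S * S \<in> carrier_mat N N" using S by simp
  have X: "1\<^sub>m N - S \<in> carrier_mat N N" using S by simp
  have tX: "transpose_mat (1\<^sub>m N - S) = 1\<^sub>m N - S" using S sym by (simp add: transpose_minus[OF one_carrier_mat S])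
  have e1: "(1\<^sub>m N - S) * S * (1\<^sub>m N - S) = (S - S * S) - (S * S - S * S * S)"
  proof -
    have "(1\<^sub>m N - S) * S = S - S * S" using S by (simp add: minus_mult_distrib_mat[OF one_carrier_mat S S])
    moreover have "(S - S * S) * (1\<^sub>m N - S) = S * (1\<^sub>m N - S) - (S * S) * (1\<^sub>m N - S)"
      using S by (simp add: minus_mult_distrib_mat[OF S SS X])
    moreover have "S * (1\<^sub>m N - S) = S - S * S" using S by (simp add: mult_minus_distrib_mat[OF S one_carrier_mat S])
    moreover have "(S * S) * (1\<^sub>m N - S) = S * S - S * S * S" using S by (simp add: mult_minus_distrib_mat[OF SS one_carrier_mat S])
    ultimately show ?thesis by simp
  qed
  have F1: "0 \<le> trr N S - 2 * trr N (S * S) + trr N (S * S * S)"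
  proof -
    have "0 \<le> trr N (transpose_mat (1\<^sub>m N - S) * S * (1\<^sub>m N - S))"
      by (rule psd_trace[OF S X psd])
    also have "\<dots> = trr N S - 2 * trr N (S * S) + trr N (S * S * S)"
      unfolding tX e1 using S SS SSS by (simp add: trr_minus)
    finally show ?thesis .
  qed
  have BT: "transpose_mat B \<in> carrier_mat N N" using B by simp
  have F2: "0 \<le> trr N S - trr N (S * S * S)"
  proof -
    have "0 \<le> trr N (transpose_mat (transpose_mat B) * S * transpose_mat B)"
      by (rule psd_trace[OF S BT psd])
    also have "transpose_mat (transpose_mat B) * S * transpose_mat B = B * (S * transpose_mat B)"
      using B S by simp
    also have "trr N (B * (S * transpose_mat B)) = trr N ((S * transpose_mat B) * B)"
      using B S by (intro trr_comm') auto
    also have "(S * transpose_mat B) * B = S * (transpose_mat B * B)" using B S by simp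
    also have "transpose_mat B * B = 1\<^sub>m N - S * S"
    proof (rule eq_matI)
      fix i j assume ij: "i < dim_row (1\<^sub>m N - S * S)" "j < dim_col (1\<^sub>m N - S * S)"
      then have ij': "i < N" "j < N" using S by auto
      have "(S * S + transpose_mat B * B) $$ (i,j) = 1\<^sub>m N $$ (i,j)" using SB by simp
      then have "(S * S) $$ (i,j) + (transpose_mat B * B) $$ (i,j) = 1\<^sub>m N $$ (i,j)"
        using ij' S B by simp
      then show "(transpose_mat B * B) $$ (i,j) = (1\<^sub>m N - S * S) $$ (i,j)"
        using ij' S B by simp
    qed (use S B in auto)
    also have "S * (1\<^sub>m N - S * S) = S - S * S * S" using S by (simp add: mult_minus_distrib_mat[OF S one_carrier_mat SS])
    finally show ?thesis using S SSS by (simp add: trr_minus)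
  qed
  show ?thesis using F1 F2 by simp
qed



lemma sumsq_trr:
  fixes M :: "real mat"
  assumes "M \<in> carrier_mat N N"
  shows "trr N (transpose_mat M * M) = (\<Sum>i<N. \<Sum>a<N. M $$ (a,i) * M $$ (a,i))"
  using trr_tA[OF assms assms] .

lemma real_approx:
  fixes A B :: "real mat"
  assumes A: "A \<in> carrier_mat N N" and B: "B \<in> carrier_mat N N"
    and AB: "transpose_mat A * A + transpose_mat B * B = 1\<^sub>m N"
  shows "\<exists>V\<in>carrier_mat N N. transpose_mat V * V = 1\<^sub>m N \<and>
     (\<Sum>i<N. \<Sum>a<N. (A $$ (a,i) - V $$ (a,i))^2) \<le> (\<Sum>i<N. \<Sum>a<N. (B $$ (a,i))^2)"
proof -
  obtain V where V: "V \<in> carrier_mat N N" and VV: "transpose_mat V * V = 1\<^sub>m N"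
    and mx: "\<And>W. W\<in>carrier_mat N N \<Longrightarrow> transpose_mat W * W = 1\<^sub>m N \<Longrightarrow>
        trr N (transpose_mat W * A) \<le> trr N (transpose_mat V * A)"
    using exists_max_orth[OF A] by blast
  have VV': "V * transpose_mat V = 1\<^sub>m N"
    using mat_mult_left_right_inverse[of "transpose_mat V" N V] V VV by auto
  define S where "S = transpose_mat V * A"
  have S: "S \<in> carrier_mat N N" unfolding S_def using V A by simp
  have opt: "\<forall>H\<in>carrier_mat N N. transpose_mat H * H = 1\<^sub>m N \<longrightarrow> trr N (transpose_mat H * S) \<le> trr N S"
  proof (intro ballI impI)
    fix H :: "real mat" assume H: "H \<in> carrier_mat N N" and HH: "transpose_mat H * H = 1\<^sub>m N"
    have W: "V * H \<in> carrier_mat N N" using V H by simp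
    have tW: "transpose_mat (V * H) = transpose_mat H * transpose_mat V" using V H by (simp add: transpose_mult)
    have tV: "transpose_mat V \<in> carrier_mat N N" and tH: "transpose_mat H \<in> carrier_mat N N" using V H by auto
    have "transpose_mat (V * H) * (V * H) = transpose_mat H * (transpose_mat V * (V * H))"
      unfolding tW using assoc_mult_mat[OF tH tV W] .
    also have "transpose_mat V * (V * H) = (transpose_mat V * V) * H"
      using assoc_mult_mat[OF tV V H] by simp
    also have "\<dots> = H" using VV H by simp
    also note HH
    finally have WW: "transpose_mat (V * H) * (V * H) = 1\<^sub>m N" .
    have "transpose_mat (V * H) * A = transpose_mat H * S" unfolding tW S_def using assoc_mult_mat[OF tH tV A] .
    then show "trr N (transpose_mat H * S) \<le> trr N S" using mx[OF W WW] unfolding S_def by simp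
  qed
  have psd: "\<And>x. (\<Sum>a<N. \<Sum>b<N. x a * S $$ (a,b) * x b) \<ge> 0" using psd_from_max[OF S opt] .
  have sym: "transpose_mat S = S"
  proof (rule eq_matI)
    fix i j assume "i < dim_row S" "j < dim_col S"
    then have "i < N" "j < N" using S by auto
    then show "transpose_mat S $$ (i,j) = S $$ (i,j)" using sym_from_max[OF S opt, of j i] S by simp
  qed (use S in auto)
  have SSA: "S * S = transpose_mat A * A"
  proof -
    have "S * S = transpose_mat S * S" using sym by simp
    also have "\<dots> = transpose_mat A * V * (transpose_mat V * A)"
      unfolding S_def using V A by (simp add: transpose_mult)
    also have "\<dots> = transpose_mat A * (V * (transpose_mat V * A))"
      using assoc_mult_mat[of "transpose_mat A" N N V N "transpose_mat V * A" N] V A by simp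
    also have "V * (transpose_mat V * A) = (V * transpose_mat V) * A"
      using assoc_mult_mat[of V N N "transpose_mat V" N A N] V A by simp
    also have "\<dots> = A" using VV' A by simp
    finally show ?thesis .
  qed
  have SB: "S * S + transpose_mat B * B = 1\<^sub>m N" using SSA AB by simp
  have t21: "trr N (S * S) \<le> trr N S" using key_trace[OF S B sym psd SB] .
  have tAB: "trr N (transpose_mat A * A) + trr N (transpose_mat B * B) = real N"
    using trr_add[of "transpose_mat A * A" N "transpose_mat B * B"] AB A B by (simp add: trr_one)
  have "(\<Sum>i<N. \<Sum>a<N. (A $$ (a,i) - V $$ (a,i))^2) =
     (\<Sum>i<N. \<Sum>a<N. A $$ (a,i) * A $$ (a,i)) - 2 * (\<Sum>i<N. \<Sum>a<N. V $$ (a,i) * A $$ (a,i))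
     + (\<Sum>i<N. \<Sum>a<N. V $$ (a,i) * V $$ (a,i))"
    by (simp add: power2_eq_square algebra_simps sum.distrib sum_subtractf sum_distrib_left)
  also have "\<dots> = trr N (S * S) - 2 * trr N S + real N"
    using sumsq_trr[OF A] sumsq_trr[OF V] trr_tA[OF V A] SSA VV unfolding S_def by (simp add: trr_one)
  also have "\<dots> \<le> real N - trr N (S * S)" using t21 by simp
  also have "\<dots> = (\<Sum>i<N. \<Sum>a<N. (B $$ (a,i))^2)"
    using sumsq_trr[OF B] tAB SSA by (simp add: power2_eq_square)
  finally show ?thesis using V VV by blast
qed



lemma cis_in_range: "\<exists>\<theta>\<in>{0..<2*pi}. cis \<theta> = cis t"
proof -
  define k where "k = \<lfloor>t / (2*pi)\<rfloor>"
  define \<theta> where "\<theta> = t - 2*pi*k"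
  have "k \<le> t / (2*pi)" "t / (2*pi) < k + 1" unfolding k_def by linarith+
  then have "2*pi*k \<le> t" "t < 2*pi*k + 2*pi" using pi_gt_zero by (simp_all add: field_simps)
  then have th: "\<theta> \<in> {0..<2*pi}" unfolding \<theta>_def by auto
  have "cis \<theta> = cis t * cis (- (2*pi*k))" unfolding \<theta>_def by (simp add: cis_mult)
  also have "cis (- (2*pi*k)) = 1"
    using cis_multiple_2pi[of "- real_of_int k"] by simp
  finally show ?thesis using th by auto
qed

lemma Dist_le:
  assumes "\<theta> \<in> {0..<2*pi}"
  shows "Dist N A B \<le> fnorm (exp (\<i> * complex_of_real \<theta>) \<cdot>\<^sub>m A - B) / sqrt (2 * real N)"
  unfolding Dist_def
proof (rule cINF_lower[OF _ assms])
  show "bdd_below ((\<lambda>\<theta>. fnorm (exp (\<i> * complex_of_real \<theta>) \<cdot>\<^sub>m A - B) / sqrt (2 * real N)) ` {0..<2*pi})"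
    by (rule bdd_belowI[of _ 0]) (auto simp: fnorm_def intro!: divide_nonneg_nonneg sum_nonneg)
qed

lemma adjU_entry:
  assumes "U \<in> carrier_mat N N" "i < N" "j < N"
  shows "(adj U * U) $$ (i,j) = (\<Sum>a<N. cnj (U $$ (a,i)) * U $$ (a,j))"
  using assms by (auto simp: adj_def scalar_prod_def atLeast0LessThan)

lemma Uadj_entry:
  assumes "U \<in> carrier_mat N N" "i < N" "j < N"
  shows "(U * adj U) $$ (i,j) = (\<Sum>a<N. U $$ (i,a) * cnj (U $$ (j,a)))"
  using assms by (auto simp: adj_def scalar_prod_def atLeast0LessThan)

lemma UUt_entry:
  assumes "U \<in> carrier_mat N N" "i < N" "j < N"
  shows "(U * transpose_mat U) $$ (i,j) = (\<Sum>a<N. U $$ (i,a) * U $$ (j,a))"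
  using assms by (auto simp: scalar_prod_def atLeast0LessThan)

lemma UtU_entry:
  assumes "U \<in> carrier_mat N N" "i < N" "j < N"
  shows "(transpose_mat U * U) $$ (i,j) = (\<Sum>a<N. U $$ (a,i) * U $$ (a,j))"
  using assms by (auto simp: scalar_prod_def atLeast0LessThan)

lemma real_orth_in_orth_group:
  fixes V :: "real mat"
  assumes V: "V \<in> carrier_mat N N" and VV: "transpose_mat V * V = 1\<^sub>m N"
  shows "Matrix.mat N N (\<lambda>p. complex_of_real (V $$ p)) \<in> orth_group N"
proof -
  define Vc where "Vc = Matrix.mat N N (\<lambda>p. complex_of_real (V $$ p))"
  have VV': "V * transpose_mat V = 1\<^sub>m N"
    using mat_mult_left_right_inverse[of "transpose_mat V" N V] V VV by auto
  have Vc: "Vc \<in> carrier_mat N N" unfolding Vc_def by simp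
  have r1: "(\<Sum>a<N. V $$ (i,a) * V $$ (j,a)) = (if i = j then 1 else 0)" if "i<N" "j<N" for i j
    using UUt_entry[OF V that] VV' that by simp
  have r2: "(\<Sum>a<N. V $$ (a,i) * V $$ (a,j)) = (if i = j then 1 else 0)" if "i<N" "j<N" for i j
    using UtU_entry[OF V that] VV that by simp
  have e1: "Vc * adj Vc = 1\<^sub>m N"
  proof (rule eq_matI)
    fix i j assume "i < dim_row (1\<^sub>m N)" "j < dim_col (1\<^sub>m N)"
    then have ij: "i < N" "j < N" by auto
    have "(Vc * adj Vc) $$ (i,j) = (\<Sum>a<N. complex_of_real (V $$ (i,a) * V $$ (j,a)))"
      using Uadj_entry[OF Vc ij] ij by (simp add: Vc_def)
    also have "\<dots> = complex_of_real (\<Sum>a<N. V $$ (i,a) * V $$ (j,a))" by simp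
    finally show "(Vc * adj Vc) $$ (i,j) = 1\<^sub>m N $$ (i,j)" using r1[OF ij] ij by simp
  qed (use Vc in \<open>auto simp: adj_def\<close>)
  have e2: "adj Vc * Vc = 1\<^sub>m N"
  proof (rule eq_matI)
    fix i j assume "i < dim_row (1\<^sub>m N)" "j < dim_col (1\<^sub>m N)"
    then have ij: "i < N" "j < N" by auto
    have "(adj Vc * Vc) $$ (i,j) = (\<Sum>a<N. complex_of_real (V $$ (a,i) * V $$ (a,j)))"
      using adjU_entry[OF Vc ij] ij by (simp add: Vc_def)
    also have "\<dots> = complex_of_real (\<Sum>a<N. V $$ (a,i) * V $$ (a,j))" by simp
    finally show "(adj Vc * Vc) $$ (i,j) = 1\<^sub>m N $$ (i,j)" using r2[OF ij] ij by simp
  qed (use Vc in \<open>auto simp: adj_def\<close>)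
  have e3: "Vc * transpose_mat Vc = 1\<^sub>m N"
  proof (rule eq_matI)
    fix i j assume "i < dim_row (1\<^sub>m N)" "j < dim_col (1\<^sub>m N)"
    then have ij: "i < N" "j < N" by auto
    have "(Vc * transpose_mat Vc) $$ (i,j) = (\<Sum>a<N. complex_of_real (V $$ (i,a) * V $$ (j,a)))"
      using UUt_entry[OF Vc ij] ij by (simp add: Vc_def)
    also have "\<dots> = complex_of_real (\<Sum>a<N. V $$ (i,a) * V $$ (j,a))" by simp
    finally show "(Vc * transpose_mat Vc) $$ (i,j) = 1\<^sub>m N $$ (i,j)" using r1[OF ij] ij by simp
  qed (use Vc in auto)
  have e4: "transpose_mat Vc * Vc = 1\<^sub>m N"
  proof (rule eq_matI)
    fix i j assume "i < dim_row (1\<^sub>m N)" "j < dim_col (1\<^sub>m N)"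
    then have ij: "i < N" "j < N" by auto
    have "(transpose_mat Vc * Vc) $$ (i,j) = (\<Sum>a<N. complex_of_real (V $$ (a,i) * V $$ (a,j)))"
      using UtU_entry[OF Vc ij] ij by (simp add: Vc_def)
    also have "\<dots> = complex_of_real (\<Sum>a<N. V $$ (a,i) * V $$ (a,j))" by simp
    finally show "(transpose_mat Vc * Vc) $$ (i,j) = 1\<^sub>m N $$ (i,j)" using r2[OF ij] ij by simp
  qed (use Vc in auto)
  show ?thesis using Vc e1 e2 e3 e4 unfolding orth_group_def unitary_mat_def Vc_def by auto
qed

lemma far_bound:
  fixes U :: "complex mat"
  assumes U: "unitary_mat N U" and N: "N > 0" and eps: "\<epsilon> > 0"
    and far: "eps_far N \<epsilon> (orth_group N) U"
  shows "cmod (\<Sum>a<N. \<Sum>i<N. U $$ (a,i) * U $$ (a,i)) \<le> real N * (1 - 2 * \<epsilon>^2)"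
proof -
  define s where "s = (\<Sum>a<N. \<Sum>i<N. U $$ (a,i) * U $$ (a,i))"
  define w where "w = cis (- (Arg s / 2))"
  have Uc: "U \<in> carrier_mat N N" and UU: "adj U * U = 1\<^sub>m N" using U unfolding unitary_mat_def by auto
  have ww: "cnj w * w = 1" unfolding w_def by (simp add: cis_cnj cis_mult)
  have w2s: "w * w * s = complex_of_real (cmod s)"
  proof -
    have "w * w = cis (- Arg s)" unfolding w_def by (simp add: cis_mult)
    moreover have "s = complex_of_real (cmod s) * cis (Arg s)" using rcis_cmod_Arg[of s] by (simp add: rcis_def)
    ultimately show ?thesis by (metis (no_types, lifting) cis_mult mult.commute mult.left_commute mult_1_right add.left_inverse cis_zero)
  qed
  define A where "A = Matrix.mat N N (\<lambda>(a,i). Re (w * U $$ (a,i)))"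
  define B where "B = Matrix.mat N N (\<lambda>(a,i). Im (w * U $$ (a,i)))"
  have A: "A \<in> carrier_mat N N" and B: "B \<in> carrier_mat N N" unfolding A_def B_def by auto
  have ReIm: "Re (cnj z1 * z2) = Re z1 * Re z2 + Im z1 * Im z2" for z1 z2 :: complex by simp
  have AB: "transpose_mat A * A + transpose_mat B * B = 1\<^sub>m N"
  proof (rule eq_matI)
    fix i j assume "i < dim_row (1\<^sub>m N)" "j < dim_col (1\<^sub>m N)"
    then have ij: "i < N" "j < N" by auto
    have "(transpose_mat A * A + transpose_mat B * B) $$ (i,j)
        = (\<Sum>a<N. A $$ (a,i) * A $$ (a,j)) + (\<Sum>a<N. B $$ (a,i) * B $$ (a,j))"
      using UtU_entry[OF A ij] UtU_entry[OF B ij] ij A B by simp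
    also have "\<dots> = (\<Sum>a<N. Re (cnj (w * U $$ (a,i)) * (w * U $$ (a,j))))"
      unfolding ReIm sum.distrib[symmetric] using ij by (intro sum.cong refl) (simp add: A_def B_def)
    also have "\<dots> = Re (\<Sum>a<N. cnj (U $$ (a,i)) * U $$ (a,j))"
    proof -
      have "\<And>a. cnj (w * U $$ (a,i)) * (w * U $$ (a,j)) = (cnj w * w) * (cnj (U $$ (a,i)) * U $$ (a,j))"
        by (simp add: algebra_simps)
      then have eq: "\<And>a. cnj (w * U $$ (a,i)) * (w * U $$ (a,j)) = cnj (U $$ (a,i)) * U $$ (a,j)"
        using ww by simp
      show ?thesis by (simp only: eq Re_sum)
    qed
    also have "\<dots> = Re ((adj U * U) $$ (i,j))" using adjU_entry[OF Uc ij] by simp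
    finally show "(transpose_mat A * A + transpose_mat B * B) $$ (i,j) = 1\<^sub>m N $$ (i,j)"
      using UU ij by simp
  qed (use A B in auto)
  obtain V where V: "V \<in> carrier_mat N N" and VV: "transpose_mat V * V = 1\<^sub>m N"
    and appr: "(\<Sum>i<N. \<Sum>a<N. (A $$ (a,i) - V $$ (a,i))^2) \<le> (\<Sum>i<N. \<Sum>a<N. (B $$ (a,i))^2)"
    using real_approx[OF A B AB] by blast
  define Vc where "Vc = Matrix.mat N N (\<lambda>p. complex_of_real (V $$ p))"
  have Vorth: "Vc \<in> orth_group N" unfolding Vc_def by (rule real_orth_in_orth_group[OF V VV])
  obtain \<theta> where th: "\<theta> \<in> {0..<2*pi}" and cth: "cis \<theta> = w"
    using cis_in_range[of "- (Arg s / 2)"] unfolding w_def by blast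
  have eth: "exp (\<i> * complex_of_real \<theta>) = w" using cth by (simp add: cis_conv_exp)
  define F2 where "F2 = (\<Sum>i<N. \<Sum>j<N. (cmod ((w \<cdot>\<^sub>m U - Vc) $$ (i,j)))\<^sup>2)"
  have fn: "fnorm (exp (\<i> * complex_of_real \<theta>) \<cdot>\<^sub>m U - Vc) = sqrt F2"
    unfolding fnorm_def F2_def eth using Uc by (simp add: Vc_def)
  have F2eq: "F2 = (\<Sum>i<N. \<Sum>a<N. (A $$ (a,i) - V $$ (a,i))^2) + (\<Sum>i<N. \<Sum>a<N. (B $$ (a,i))^2)"
  proof -
    have "F2 = (\<Sum>i<N. \<Sum>j<N. (A $$ (i,j) - V $$ (i,j))^2 + (B $$ (i,j))^2)"
      unfolding F2_def using Uc
      by (intro sum.cong refl) (simp add: Vc_def A_def B_def cmod_power2)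
    also have "\<dots> = (\<Sum>j<N. \<Sum>i<N. (A $$ (i,j) - V $$ (i,j))^2 + (B $$ (i,j))^2)"
      by (rule sum.swap)
    finally show ?thesis by (simp add: sum.distrib)
  qed
  have trace: "(\<Sum>i<N. \<Sum>a<N. (A $$ (a,i))^2) + (\<Sum>i<N. \<Sum>a<N. (B $$ (a,i))^2) = real N"
  proof -
    have t0: "(\<Sum>i<N. (transpose_mat A * A + transpose_mat B * B) $$ (i,i)) = real N" using AB by simp
    have ent: "(transpose_mat A * A + transpose_mat B * B) $$ (i,i) = (\<Sum>a<N. (A $$ (a,i))^2) + (\<Sum>a<N. (B $$ (a,i))^2)"
      if i: "i < N" for i
    proof -
      have "(transpose_mat A * A + transpose_mat B * B) $$ (i,i) = (transpose_mat A * A) $$ (i,i) + (transpose_mat B * B) $$ (i,i)"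
        using A B i by (intro index_add_mat) auto
      also have "\<dots> = (\<Sum>a<N. A $$ (a,i) * A $$ (a,i)) + (\<Sum>a<N. B $$ (a,i) * B $$ (a,i))"
        by (simp only: UtU_entry[OF A i i] UtU_entry[OF B i i])
      finally show ?thesis by (simp only: power2_eq_square)
    qed
    have "(\<Sum>i<N. (transpose_mat A * A + transpose_mat B * B) $$ (i,i))
        = (\<Sum>i<N. (\<Sum>a<N. (A $$ (a,i))^2) + (\<Sum>a<N. (B $$ (a,i))^2))"
      by (rule sum.cong[OF refl]) (use ent in blast)
    moreover have "\<dots> = (\<Sum>i<N. \<Sum>a<N. (A $$ (a,i))^2) + (\<Sum>i<N. \<Sum>a<N. (B $$ (a,i))^2)"
      by (simp only: sum.distrib)
    ultimately show ?thesis using t0 by simp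
  qed
  have diff: "(\<Sum>i<N. \<Sum>a<N. (A $$ (a,i))^2) - (\<Sum>i<N. \<Sum>a<N. (B $$ (a,i))^2) = cmod s"
  proof -
    have "cmod s = Re (w * w * s)" using w2s by simp
    also have "w * w * s = (\<Sum>a<N. \<Sum>i<N. (w * U $$ (a,i)) * (w * U $$ (a,i)))"
      unfolding s_def by (simp add: sum_distrib_left algebra_simps)
    also have "Re \<dots> = (\<Sum>a<N. \<Sum>i<N. (A $$ (a,i))^2 - (B $$ (a,i))^2)"
      by (simp add: Re_sum A_def B_def power2_eq_square)
    also have "\<dots> = (\<Sum>i<N. \<Sum>a<N. (A $$ (a,i))^2 - (B $$ (a,i))^2)" by (rule sum.swap)
    finally show ?thesis by (simp add: sum_subtractf)
  qed
  have F2le: "F2 \<le> real N - cmod s" using F2eq appr trace diff by linarith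
  have "\<epsilon> \<le> Dist N U Vc" using far Vorth unfolding eps_far_def by blast
  also have "\<dots> \<le> sqrt F2 / sqrt (2 * real N)" using Dist_le[OF th, of N U Vc] fn by simp
  finally have e1: "\<epsilon> \<le> sqrt F2 / sqrt (2 * real N)" .
  have F2nn: "F2 \<ge> 0" unfolding F2_def by (intro sum_nonneg) auto
  have "\<epsilon>^2 \<le> (sqrt F2 / sqrt (2 * real N))^2" using e1 eps by (intro power_mono) auto
  also have "\<dots> = F2 / (2 * real N)" using F2nn N by (simp add: power_divide)
  finally have "\<epsilon>^2 * (2 * real N) \<le> F2" using N by (simp add: field_simps)
  then show ?thesis using F2le unfolding s_def by (simp add: algebra_simps)
qed

lemma prop_s:
  fixes U :: "complex mat"
  assumes P: "has_property N (orth_group N) U"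
  shows "cmod (\<Sum>a<N. \<Sum>i<N. U $$ (a,i) * U $$ (a,i)) = real N"
proof -
  obtain V \<theta> where V: "V \<in> orth_group N" and U: "U = exp (\<i> * complex_of_real \<theta>) \<cdot>\<^sub>m V"
    using P unfolding has_property_def by blast
  have Vc: "V \<in> carrier_mat N N" and VV: "V * transpose_mat V = 1\<^sub>m N"
    using V unfolding orth_group_def unitary_mat_def by auto
  define e where "e = exp (\<i> * complex_of_real \<theta>)"
  have "(\<Sum>a<N. \<Sum>i<N. U $$ (a,i) * U $$ (a,i)) = (\<Sum>a<N. e * e * (\<Sum>i<N. V $$ (a,i) * V $$ (a,i)))"
    unfolding U e_def[symmetric] using Vc by (intro sum.cong refl) (simp add: sum_distrib_left algebra_simps)
  also have "\<dots> = (\<Sum>a<N. e * e * (V * transpose_mat V) $$ (a,a))"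
  proof (intro sum.cong refl)
    fix a assume "a \<in> {..<N}"
    then have a: "a < N" by simp
    show "e * e * (\<Sum>i<N. V $$ (a,i) * V $$ (a,i)) = e * e * (V * transpose_mat V) $$ (a,a)"
      by (simp only: UUt_entry[OF Vc a a])
  qed
  also have "\<dots> = e * e * of_nat N" using VV by simp
  finally have "(\<Sum>a<N. \<Sum>i<N. U $$ (a,i) * U $$ (a,i)) = e * e * of_nat N" .
  moreover have "cmod e = 1" unfolding e_def by (simp add: cis_conv_exp[symmetric])
  ultimately show ?thesis by (simp add: norm_mult)
qed



lemma sum_split_mult: "(\<Sum>j<(p::nat)*q. f j) = (\<Sum>a<p. \<Sum>b<q. f (a*q+b))"
proof (induction p)
  case 0 then show ?case by simp
next
  case (Suc p)
  have e: "Suc p * q = p*q + q" by simp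
  have "(\<Sum>j<Suc p*q. f j) = (\<Sum>j\<in>{0..<p*q}. f j) + (\<Sum>j\<in>{p*q..<p*q+q}. f j)"
    unfolding e lessThan_atLeast0 by (rule sum.atLeastLessThan_concat[symmetric]) auto
  also have "(\<Sum>j\<in>{p*q..<p*q+q}. f j) = (\<Sum>b\<in>{0..<q}. f (b + p*q))"
    using sum.shift_bounds_nat_ivl[of f 0 "p*q" q] by (simp add: add.commute[of q])
  also have "(\<Sum>j\<in>{0..<p*q}. f j) = (\<Sum>a<p. \<Sum>b<q. f (a*q+b))"
    using Suc.IH by (simp add: lessThan_atLeast0)
  finally show ?case by (simp add: lessThan_atLeast0 add.commute[of _ "p*q"])
qed

definition kronv :: "complex Matrix.vec \<Rightarrow> complex Matrix.vec \<Rightarrow> complex Matrix.vec" where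
  "kronv a b = Matrix.vec (dim_vec a * dim_vec b) (\<lambda>i. a $ (i div dim_vec b) * b $ (i mod dim_vec b))"

lemma dim_kronv[simp]: "dim_vec (kronv a b) = dim_vec a * dim_vec b"
  unfolding kronv_def by simp

lemma index_kronv: "i < dim_vec a * dim_vec b \<Longrightarrow> kronv a b $ i = a $ (i div dim_vec b) * b $ (i mod dim_vec b)"
  unfolding kronv_def by simp

lemma index_kronv2: "x < dim_vec a \<Longrightarrow> y < dim_vec b \<Longrightarrow> kronv a b $ (x * dim_vec b + y) = a $ x * b $ y"
proof -
  assume xy: "x < dim_vec a" "y < dim_vec b"
  have "x * dim_vec b + y < dim_vec a * dim_vec b"
  proof -
    have "x * dim_vec b + y < x * dim_vec b + dim_vec b" using xy by simp
    also have "\<dots> = Suc x * dim_vec b" by simp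
    also have "\<dots> \<le> dim_vec a * dim_vec b" using xy by (intro mult_right_mono) auto
    finally show ?thesis .
  qed
  have b0: "dim_vec b \<noteq> 0" using xy by auto
  have "(x * dim_vec b + y) div dim_vec b = x" "(x * dim_vec b + y) mod dim_vec b = y"
    using xy b0 by auto
  moreover note \<open>x * dim_vec b + y < dim_vec a * dim_vec b\<close>
  ultimately show ?thesis using xy by (simp add: index_kronv)
qed

lemma kronv_assoc: "kronv (kronv a b) c = kronv a (kronv b c)"
proof (rule eq_vecI)
  show "dim_vec (kronv (kronv a b) c) = dim_vec (kronv a (kronv b c))" by (simp add: mult.assoc)
  fix i assume i: "i < dim_vec (kronv a (kronv b c))"
  define nb where "nb = dim_vec b" define nc where "nc = dim_vec c"
  have i': "i < dim_vec a * (nb * nc)" using i unfolding nb_def nc_def by simp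
  have nbc: "nb > 0" "nc > 0" using i' by (cases "nb = 0"; cases "nc = 0"; auto)+
  have d1: "i div nc < dim_vec a * nb" using i' by (simp add: div_less_iff_less_mult mult.assoc mult.commute[of nc] nbc)
  have d2: "i mod (nb * nc) < nb * nc" using nbc by simp
  have "kronv (kronv a b) c $ i = a $ (i div nc div nb) * b $ (i div nc mod nb) * c $ (i mod nc)"
    using i' d1 by (simp add: index_kronv nb_def nc_def mult.assoc)
  moreover have "kronv a (kronv b c) $ i = a $ (i div (nb*nc)) * (b $ (i mod (nb*nc) div nc) * c $ (i mod (nb*nc) mod nc))"
    using i' d2 by (simp add: index_kronv nb_def nc_def)
  moreover have "i div nc div nb = i div (nb*nc)"
    using div_mult2_eq[of i nc nb] by (simp only: mult.commute[of nc nb])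
  moreover have "i mod (nb*nc) div nc = i div nc mod nb"
    using mod_mult2_eq[of i nc nb] nbc by (simp add: mult.commute[of nb])
  moreover have "i mod (nb*nc) mod nc = i mod nc"
    by (simp add: mult.commute[of nb] mod_mod_cancel)
  ultimately show "kronv (kronv a b) c $ i = kronv a (kronv b c) $ i" by (simp add: mult.assoc)
qed

definition unitv :: "complex Matrix.vec" where "unitv = Matrix.vec 1 (\<lambda>_. 1)"

lemma kronv_unit_left: "kronv unitv v = v"
  by (rule eq_vecI) (auto simp: kronv_def unitv_def)

lemma kronv_unit_right: "kronv v unitv = v"
  by (rule eq_vecI) (auto simp: kronv_def unitv_def)

lemma mult_mat_vec_sum:
  assumes "i < dim_row A" "dim_col A = n" "dim_vec v = n"
  shows "(A *\<^sub>v v) $ i = (\<Sum>j<n. A $$ (i,j) * v $ j)"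
  using assms by (simp add: scalar_prod_def atLeast0LessThan)

lemma kron_one_vec:
  assumes A: "A \<in> carrier_mat n n" and p: "dim_vec p = n" and r: "dim_vec r = L"
  shows "kron A (1\<^sub>m L) *\<^sub>v kronv p r = kronv (A *\<^sub>v p) r"
proof (rule eq_vecI)
  show "dim_vec (kron A (1\<^sub>m L) *\<^sub>v kronv p r) = dim_vec (kronv (A *\<^sub>v p) r)"
    using A p r by (simp add: kron_def)
  fix i assume "i < dim_vec (kronv (A *\<^sub>v p) r)"
  then have i: "i < n * L" using A r by simp
  then have L0: "L > 0" by (cases "L = 0") auto
  have idl: "i div L < n" using i L0 by (simp add: div_less_iff_less_mult)
  have iml: "i mod L < L" using L0 by simp
  have "(kron A (1\<^sub>m L) *\<^sub>v kronv p r) $ i = (\<Sum>j<n*L. kron A (1\<^sub>m L) $$ (i,j) * kronv p r $ j)"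
    using A i p r by (intro mult_mat_vec_sum) (auto simp: kron_def)
  also have "\<dots> = (\<Sum>a<n. \<Sum>b<L. kron A (1\<^sub>m L) $$ (i,a*L+b) * kronv p r $ (a*L+b))"
    by (rule sum_split_mult)
  also have "\<dots> = (\<Sum>a<n. \<Sum>b<L. (if b = i mod L then A $$ (i div L, a) * p $ a * r $ (i mod L) else 0))"
  proof (intro sum.cong refl)
    fix a b assume a: "a \<in> {..<n}" and b: "b \<in> {..<L}"
    have ab: "a*L+b < n*L"
    proof -
      have "a*L+b < a*L+L" using b by simp
      also have "\<dots> = Suc a * L" by simp
      also have "\<dots> \<le> n*L" using a by (intro mult_right_mono) auto
      finally show ?thesis .
    qed
    have "(a*L+b) div L = a" "(a*L+b) mod L = b" using b by auto
    then show "kron A (1\<^sub>m L) $$ (i,a*L+b) * kronv p r $ (a*L+b) =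
      (if b = i mod L then A $$ (i div L, a) * p $ a * r $ (i mod L) else 0)"
      using i ab A p r a b iml by (auto simp: kron_def index_kronv)
  qed
  also have "\<dots> = (\<Sum>a<n. A $$ (i div L, a) * p $ a) * r $ (i mod L)"
    using iml by (simp add: sum.delta sum_distrib_right)
  also have "\<dots> = kronv (A *\<^sub>v p) r $ i"
    using i idl A p r by (simp add: index_kronv scalar_prod_def atLeast0LessThan)
  finally show "(kron A (1\<^sub>m L) *\<^sub>v kronv p r) $ i = kronv (A *\<^sub>v p) r $ i" .
qed

lemma mod_mult_eq_iff:
  assumes "(L::nat) > 0"
  shows "(i mod (N*L) = j mod (N*L)) \<longleftrightarrow> (i div L mod N = j div L mod N \<and> i mod L = j mod L)"
proof -
  have ei: "i mod (L*N) = L * (i div L mod N) + i mod L" by (rule mod_mult2_eq)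
  have ej: "j mod (L*N) = L * (j div L mod N) + j mod L" by (rule mod_mult2_eq)
  have l1: "i mod L < L" "j mod L < L" using assms by auto
  show ?thesis
  proof
    assume h: "i mod (N*L) = j mod (N*L)"
    then have "L * (i div L mod N) + i mod L = L * (j div L mod N) + j mod L"
      using ei ej by (simp add: mult.commute[of N])
    then have "(L * (i div L mod N) + i mod L) div L = (L * (j div L mod N) + j mod L) div L"
      "(L * (i div L mod N) + i mod L) mod L = (L * (j div L mod N) + j mod L) mod L" by simp_all
    then show "i div L mod N = j div L mod N \<and> i mod L = j mod L" using l1 assms by simp
  next
    assume "i div L mod N = j div L mod N \<and> i mod L = j mod L"
    then show "i mod (N*L) = j mod (N*L)" using ei ej by (simp add: mult.commute[of N])
  qed
qed

lemma kron_one_assoc: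
  assumes U: "U \<in> carrier_mat N N" and L: "L > 0"
  shows "kron U (1\<^sub>m (N*L)) = kron (kron U (1\<^sub>m N)) (1\<^sub>m L)"
proof (rule eq_matI)
  fix i j assume ij: "i < dim_row (kron (kron U (1\<^sub>m N)) (1\<^sub>m L))" "j < dim_col (kron (kron U (1\<^sub>m N)) (1\<^sub>m L))"
  then have ij': "i < N*(N*L)" "j < N*(N*L)" using U by (auto simp: kron_def mult.assoc)
  have N0: "N > 0" using ij' by (cases "N = 0") auto
  have NL: "N*L > 0" using N0 L by simp
  have d1: "i div (N*L) < N" "j div (N*L) < N" using ij' NL by (auto simp: div_less_iff_less_mult)
  have d2: "i div L < N*N" "j div L < N*N" using ij' L by (auto simp: div_less_iff_less_mult mult.assoc)
  have m1: "i mod (N*L) < N*L" "j mod (N*L) < N*L" using NL by auto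
  have m2: "i mod L < L" "j mod L < L" "i div L mod N < N" "j div L mod N < N" using L N0 by auto
  have dd: "i div L div N = i div (N*L)" "j div L div N = j div (N*L)"
    by (simp_all add: div_mult2_eq mult.commute[of N])
  have "kron U (1\<^sub>m (N*L)) $$ (i,j) = U $$ (i div (N*L), j div (N*L)) * (if i mod (N*L) = j mod (N*L) then 1 else 0)"
    using ij' U m1 by (simp add: kron_def)
  moreover have "kron (kron U (1\<^sub>m N)) (1\<^sub>m L) $$ (i,j) =
     U $$ (i div L div N, j div L div N) * (if i div L mod N = j div L mod N then 1 else 0) * (if i mod L = j mod L then 1 else 0)"
    using ij' U d2 m2 N0 by (simp add: kron_def mult.assoc)
  ultimately show "kron U (1\<^sub>m (N*L)) $$ (i,j) = kron (kron U (1\<^sub>m N)) (1\<^sub>m L) $$ (i,j)"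
    using mod_mult_eq_iff[OF L, of i N j] dd by auto
qed (use U in \<open>auto simp: kron_def mult.assoc\<close>)

lemma mult_delta: "(if j = a then 1 else 0) * x = (if j = a then x else (0::'a::semiring_1))" by simp

lemma cnj_delta[simp]: "cnj (if P then (1::complex) else 0) = (if P then 1 else 0)" by auto

definition pm :: "nat \<Rightarrow> (nat \<Rightarrow> nat) \<Rightarrow> complex mat" where
  "pm n f = Matrix.mat n n (\<lambda>(i,j). if j = f i then 1 else 0)"

lemma pm_vec:
  assumes f: "\<And>i. i < n \<Longrightarrow> f i < n" and v: "dim_vec v = n"
  shows "pm n f *\<^sub>v v = Matrix.vec n (\<lambda>i. v $ f i)"
proof (rule eq_vecI)
  fix i assume "i < dim_vec (Matrix.vec n (\<lambda>i. v $ f i))"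
  then have i: "i < n" by simp
  have "(pm n f *\<^sub>v v) $ i = (\<Sum>j<n. (if j = f i then 1 else 0) * v $ j)"
    using i v by (simp add: pm_def scalar_prod_def atLeast0LessThan)
  also have "\<dots> = v $ f i" using f[OF i] by (simp add: mult_delta sum.delta)
  finally show "(pm n f *\<^sub>v v) $ i = Matrix.vec n (\<lambda>i. v $ f i) $ i" using i by simp
qed (simp add: pm_def)

lemma pm_unitary:
  assumes bij: "bij_betw f {..<n} {..<n}"
  shows "unitary_mat n (pm n f)"
proof -
  have f: "f i < n" if "i < n" for i using bij that unfolding bij_betw_def by auto
  have inj: "f i = f j \<Longrightarrow> i < n \<Longrightarrow> j < n \<Longrightarrow> i = j" for i j
    using bij unfolding bij_betw_def inj_on_def by auto
  have sur: "\<exists>r<n. f r = i" if "i < n" for i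
    using bij that unfolding bij_betw_def by (metis imageE lessThan_iff)
  have P: "pm n f \<in> carrier_mat n n" by (simp add: pm_def)
  have e1: "pm n f * adj (pm n f) = 1\<^sub>m n"
  proof (rule eq_matI)
    fix i j assume "i < dim_row (1\<^sub>m n)" "j < dim_col (1\<^sub>m n)"
    then have ij: "i < n" "j < n" by auto
    have "(pm n f * adj (pm n f)) $$ (i,j) = (\<Sum>r<n. (if r = f i then 1 else 0) * (if r = f j then 1 else 0))"
      using ij by (simp add: pm_def adj_def scalar_prod_def atLeast0LessThan)
    also have "\<dots> = (if f i = f j then 1 else 0)"
      using f[OF ij(1)] by (simp add: delta_mult sum.delta)
    also have "\<dots> = (if i = j then 1 else 0)" using inj ij by auto
    finally show "(pm n f * adj (pm n f)) $$ (i,j) = 1\<^sub>m n $$ (i,j)" using ij by simp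
  qed (auto simp: pm_def adj_def)
  have e2: "adj (pm n f) * pm n f = 1\<^sub>m n"
  proof (rule eq_matI)
    fix i j assume "i < dim_row (1\<^sub>m n)" "j < dim_col (1\<^sub>m n)"
    then have ij: "i < n" "j < n" by auto
    have "(adj (pm n f) * pm n f) $$ (i,j) = (\<Sum>r<n. (if i = f r then 1 else 0) * (if j = f r then 1 else 0))"
      using ij by (simp add: pm_def adj_def scalar_prod_def atLeast0LessThan)
    also have "\<dots> = (if i = j then 1 else 0)"
    proof -
      obtain r0 where r0: "r0 < n" "f r0 = i" using sur[OF ij(1)] by blast
      have "(\<Sum>r<n. (if i = f r then 1 else 0) * (if j = f r then 1 else 0)) =
            (\<Sum>r<n. if r = r0 then (if i = j then 1 else 0) else (0::complex))"
        using r0 inj by (intro sum.cong refl) auto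
      also have "\<dots> = (if i = j then 1 else 0)" using r0 by (simp add: sum.delta)
      finally show ?thesis .
    qed
    finally show "(adj (pm n f) * pm n f) $$ (i,j) = 1\<^sub>m n $$ (i,j)" using ij by simp
  qed (auto simp: pm_def adj_def)
  show ?thesis unfolding unitary_mat_def using P e1 e2 by auto
qed

lemma lt_mult_add: "x < (p::nat) \<Longrightarrow> y < q \<Longrightarrow> x*q + y < p*q"
proof -
  assume xy: "x < p" "y < q"
  have "x*q+y < x*q+q" using xy by simp
  also have "\<dots> = Suc x * q" by simp
  also have "\<dots> \<le> p*q" using xy by (intro mult_right_mono) auto
  finally show ?thesis .
qed

definition shf :: "nat \<Rightarrow> nat \<Rightarrow> nat \<Rightarrow> nat" where "shf p q i = (i mod p) * q + i div p"

lemma shf_lt: "i < p*q \<Longrightarrow> shf p q i < p*q"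
proof -
  assume i: "i < p*q"
  then have p0: "p > 0" by (cases "p = 0") auto
  have "i div p < q" using i p0 by (simp add: div_less_iff_less_mult mult.commute)
  moreover have "i mod p < p" using p0 by simp
  ultimately show ?thesis unfolding shf_def by (intro lt_mult_add)
qed

lemma shf_inv: "i < p*q \<Longrightarrow> shf q p (shf p q i) = i"
proof -
  assume i: "i < p*q"
  then have p0: "p > 0" by (cases "p = 0") auto
  have iq: "i div p < q" using i p0 by (simp add: div_less_iff_less_mult mult.commute)
  have "shf p q i mod q = i div p" unfolding shf_def using iq by simp
  moreover have "shf p q i div q = i mod p" unfolding shf_def using iq by simp
  ultimately show ?thesis unfolding shf_def[of q p] by simp
qed

lemma shf_bij: "bij_betw (shf p q) {..<p*q} {..<p*q}"
proof (rule bij_betw_byWitness[where f' = "shf q p"])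
  show "\<forall>a\<in>{..<p*q}. shf q p (shf p q a) = a" using shf_inv by auto
  show "\<forall>a\<in>{..<p*q}. shf p q (shf q p a) = a" using shf_inv[of _ q p] by (auto simp: mult.commute)
  show "shf p q ` {..<p*q} \<subseteq> {..<p*q}" using shf_lt by auto
  show "shf q p ` {..<p*q} \<subseteq> {..<p*q}" using shf_lt[of _ q p] by (auto simp: mult.commute)
qed

lemma shf_kronv:
  assumes a: "dim_vec a = p" and b: "dim_vec b = q"
  shows "pm (p*q) (shf p q) *\<^sub>v kronv a b = kronv b a"
proof -
  have "pm (p*q) (shf p q) *\<^sub>v kronv a b = Matrix.vec (p*q) (\<lambda>i. kronv a b $ shf p q i)"
    using shf_lt a b by (intro pm_vec) auto
  also have "\<dots> = kronv b a"
  proof (rule eq_vecI)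
    fix i assume "i < dim_vec (kronv b a)"
    then have i: "i < p*q" using a b by (simp add: mult.commute)
    then have p0: "p > 0" by (cases "p = 0") auto
    have iq: "i div p < q" using i p0 by (simp add: div_less_iff_less_mult mult.commute)
    have "kronv a b $ shf p q i = a $ (i mod p) * b $ (i div p)"
      unfolding shf_def using index_kronv2[of "i mod p" a "i div p" b] a b p0 iq by simp
    moreover have "kronv b a $ i = b $ (i div p) * a $ (i mod p)"
      using i a b by (simp add: index_kronv mult.commute)
    ultimately show "Matrix.vec (p*q) (\<lambda>i. kronv a b $ shf p q i) $ i = kronv b a $ i" using i by simp
  qed (use a b in auto)
  finally show ?thesis .
qed

definition liftf :: "(nat \<Rightarrow> nat) \<Rightarrow> nat \<Rightarrow> nat \<Rightarrow> nat" where "liftf f L i = f (i div L) * L + i mod L"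

lemma liftf_lt:
  assumes f: "\<And>x. x < n \<Longrightarrow> f x < n" and i: "i < n*L"
  shows "liftf f L i < n*L"
proof -
  have L0: "L > 0" using i by (cases "L = 0") auto
  have "i div L < n" using i L0 by (simp add: div_less_iff_less_mult)
  then show ?thesis unfolding liftf_def using f L0 by (intro lt_mult_add) auto
qed

lemma liftf_bij:
  assumes bij: "bij_betw f {..<n} {..<n}"
  shows "bij_betw (liftf f L) {..<n*L} {..<n*L}"
proof -
  obtain g where g: "bij_betw g {..<n} {..<n}" "\<And>x. x < n \<Longrightarrow> g (f x) = x" "\<And>x. x < n \<Longrightarrow> f (g x) = x"
    using bij by (metis bij_betw_inv_into bij_betw_inv_into_left bij_betw_inv_into_right lessThan_iff)
  have fl: "\<And>x. x < n \<Longrightarrow> f x < n" using bij unfolding bij_betw_def by auto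
  have gl: "\<And>x. x < n \<Longrightarrow> g x < n" using g(1) unfolding bij_betw_def by auto
  have inv: "liftf g L (liftf f L i) = i" if "i < n*L" "\<And>x. x < n \<Longrightarrow> g (f x) = x" "\<And>x. x < n \<Longrightarrow> f x < n"
    for f g i
  proof -
    have L0: "L > 0" using that(1) by (cases "L = 0") auto
    have "i div L < n" using that(1) L0 by (simp add: div_less_iff_less_mult)
    then show ?thesis unfolding liftf_def using L0 that by simp
  qed
  show ?thesis
  proof (rule bij_betw_byWitness[where f' = "liftf g L"])
    show "\<forall>a\<in>{..<n*L}. liftf g L (liftf f L a) = a" using inv[where f=f and g=g] g fl by auto
    show "\<forall>a\<in>{..<n*L}. liftf f L (liftf g L a) = a" using inv[where f=g and g=f] g gl by auto
    show "liftf f L ` {..<n*L} \<subseteq> {..<n*L}" using liftf_lt[OF fl] by auto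
    show "liftf g L ` {..<n*L} \<subseteq> {..<n*L}" using liftf_lt[OF gl] by auto
  qed
qed

lemma liftf_kronv:
  assumes f: "\<And>x. x < n \<Longrightarrow> f x < n" and p: "dim_vec p = n" and r: "dim_vec r = L"
  shows "pm (n*L) (liftf f L) *\<^sub>v kronv p r = kronv (pm n f *\<^sub>v p) r"
proof -
  have "pm (n*L) (liftf f L) *\<^sub>v kronv p r = Matrix.vec (n*L) (\<lambda>i. kronv p r $ liftf f L i)"
    using liftf_lt[OF f] p r by (intro pm_vec) auto
  also have "\<dots> = kronv (pm n f *\<^sub>v p) r"
  proof (rule eq_vecI)
    fix i assume "i < dim_vec (kronv (pm n f *\<^sub>v p) r)"
    then have i: "i < n*L" using p r by (simp add: pm_def)
    then have L0: "L > 0" by (cases "L = 0") auto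
    have iL: "i div L < n" using i L0 by (simp add: div_less_iff_less_mult)
    have "kronv p r $ liftf f L i = p $ f (i div L) * r $ (i mod L)"
      unfolding liftf_def using index_kronv2[of "f (i div L)" p "i mod L" r] p r f[OF iL] L0 by simp
    moreover have "kronv (pm n f *\<^sub>v p) r $ i = p $ f (i div L) * r $ (i mod L)"
      using i p r iL pm_vec[OF f p] by (simp add: index_kronv pm_def)
    ultimately show "Matrix.vec (n*L) (\<lambda>i. kronv p r $ liftf f L i) $ i = kronv (pm n f *\<^sub>v p) r $ i"
      using i by simp
  qed (use p r in \<open>auto simp: pm_def\<close>)
  finally show ?thesis .
qed



definition ip :: "complex Matrix.vec \<Rightarrow> complex Matrix.vec \<Rightarrow> complex" where
  "ip a b = (\<Sum>i<dim_vec a. cnj (a $ i) * b $ i)"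

lemma ip_kronv:
  assumes "dim_vec a = dim_vec c" "dim_vec b = dim_vec d"
  shows "ip (kronv a b) (kronv c d) = ip a c * ip b d"
proof -
  have "ip (kronv a b) (kronv c d) = (\<Sum>x<dim_vec a. \<Sum>y<dim_vec b.
      cnj (kronv a b $ (x * dim_vec b + y)) * kronv c d $ (x * dim_vec b + y))"
    unfolding ip_def dim_kronv by (rule sum_split_mult)
  also have "\<dots> = (\<Sum>x<dim_vec a. \<Sum>y<dim_vec b. (cnj (a $ x) * c $ x) * (cnj (b $ y) * d $ y))"
  proof (intro sum.cong refl)
    fix x y assume x: "x \<in> {..<dim_vec a}" and y: "y \<in> {..<dim_vec b}"
    have "kronv a b $ (x * dim_vec b + y) = a $ x * b $ y" using x y by (intro index_kronv2) auto
    moreover have "kronv c d $ (x * dim_vec b + y) = c $ x * d $ y"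
      using x y assms index_kronv2[of x c y d] by auto
    ultimately show "cnj (kronv a b $ (x * dim_vec b + y)) * kronv c d $ (x * dim_vec b + y) =
      (cnj (a $ x) * c $ x) * (cnj (b $ y) * d $ y)" by (simp add: algebra_simps)
  qed
  also have "\<dots> = ip a c * ip b d" unfolding ip_def by (simp add: sum_product)
  finally show ?thesis .
qed

lemma ip_self: "ip v v = complex_of_real (vnorm2 v)"
  unfolding ip_def vnorm2_def by (simp add: complex_norm_square[simplified] mult.commute)

lemma vnorm2_kronv: "vnorm2 (kronv a b) = vnorm2 a * vnorm2 b"
proof -
  have "complex_of_real (vnorm2 (kronv a b)) = complex_of_real (vnorm2 a * vnorm2 b)"
    using ip_kronv[of a a b b] by (simp add: ip_self)
  then show ?thesis using of_real_eq_iff by blast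
qed

lemma ip_unitv: "ip unitv unitv = 1" unfolding ip_def unitv_def by simp

lemma vnorm2_unitv: "vnorm2 unitv = 1" unfolding vnorm2_def unitv_def by simp

fun pw :: "complex Matrix.vec \<Rightarrow> nat \<Rightarrow> complex Matrix.vec" where
  "pw v 0 = unitv"
| "pw v (Suc j) = kronv v (pw v j)"

lemma dim_pw[simp]: "dim_vec (pw v j) = dim_vec v ^ j"
  by (induction j) (auto simp: unitv_def)

lemma pw_Suc_right: "pw v (Suc j) = kronv (pw v j) v"
proof (induction j)
  case 0 then show ?case by (simp add: kronv_unit_left kronv_unit_right)
next
  case (Suc j)
  have "pw v (Suc (Suc j)) = kronv v (kronv (pw v j) v)" using Suc by simp
  also have "\<dots> = kronv (pw v (Suc j)) v" by (simp add: kronv_assoc)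
  finally show ?case .
qed

lemma ip_pw: "dim_vec a = dim_vec b \<Longrightarrow> ip (pw a j) (pw b j) = (ip a b) ^ j"
  by (induction j) (auto simp: ip_unitv ip_kronv)

lemma vnorm2_pw: "vnorm2 v = 1 \<Longrightarrow> vnorm2 (pw v j) = 1"
  by (induction j) (auto simp: vnorm2_unitv vnorm2_kronv)

definition proj :: "complex Matrix.vec \<Rightarrow> complex mat" where
  "proj x = Matrix.mat (dim_vec x) (dim_vec x) (\<lambda>(i,j). x $ i * cnj (x $ j))"

lemma proj_vec:
  assumes "dim_vec v = dim_vec x"
  shows "proj x *\<^sub>v v = Matrix.vec (dim_vec x) (\<lambda>i. ip x v * x $ i)"
proof (rule eq_vecI)
  fix i assume "i < dim_vec (Matrix.vec (dim_vec x) (\<lambda>i. ip x v * x $ i))"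
  then have i: "i < dim_vec x" by simp
  have "(proj x *\<^sub>v v) $ i = (\<Sum>j<dim_vec x. x $ i * cnj (x $ j) * v $ j)"
    using i assms by (simp add: proj_def scalar_prod_def atLeast0LessThan)
  also have "\<dots> = ip x v * x $ i" unfolding ip_def using assms
    by (simp add: sum_distrib_left sum_distrib_right algebra_simps)
  finally show "(proj x *\<^sub>v v) $ i = Matrix.vec (dim_vec x) (\<lambda>i. ip x v * x $ i) $ i" using i by simp
qed (simp add: proj_def)

lemma vnorm2_proj:
  assumes "dim_vec v = dim_vec x"
  shows "vnorm2 (proj x *\<^sub>v v) = (cmod (ip x v))^2 * vnorm2 x"
  unfolding proj_vec[OF assms] vnorm2_def by (simp add: norm_mult power_mult_distrib sum_distrib_left)

lemma proj_idem:
  assumes "vnorm2 x = 1"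
  shows "proj x * proj x = proj x"
proof (rule eq_matI)
  fix i j assume "i < dim_row (proj x)" "j < dim_col (proj x)"
  then have ij: "i < dim_vec x" "j < dim_vec x" by (auto simp: proj_def)
  have "(proj x * proj x) $$ (i,j) = (\<Sum>r<dim_vec x. x $ i * cnj (x $ r) * (x $ r * cnj (x $ j)))"
    using ij by (simp add: proj_def scalar_prod_def atLeast0LessThan)
  also have "\<dots> = x $ i * cnj (x $ j) * ip x x"
    unfolding ip_def by (simp add: sum_distrib_left algebra_simps)
  also have "\<dots> = proj x $$ (i,j)" using ij assms by (simp add: ip_self proj_def)
  finally show "(proj x * proj x) $$ (i,j) = proj x $$ (i,j)" .
qed (auto simp: proj_def)

lemma proj_herm: "adj (proj x) = proj x"
  by (rule eq_matI) (auto simp: proj_def adj_def)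



definition phiv :: "nat \<Rightarrow> complex Matrix.vec" where
  "phiv N = Matrix.vec (N*N) (\<lambda>x. if x div N = x mod N then complex_of_real (1 / sqrt (real N)) else 0)"

definition e0v :: "nat \<Rightarrow> complex Matrix.vec" where
  "e0v N = Matrix.vec N (\<lambda>x. if x = 0 then 1 else 0)"

lemma dim_phiv[simp]: "dim_vec (phiv N) = N*N" unfolding phiv_def by simp
lemma dim_e0v[simp]: "dim_vec (e0v N) = N" unfolding e0v_def by simp

lemma phiv_entry: "a < N \<Longrightarrow> c < N \<Longrightarrow> phiv N $ (a*N+c) = (if a = c then complex_of_real (1 / sqrt (real N)) else 0)"
  unfolding phiv_def using lt_mult_add[of a N c N] by simp

lemma vnorm2_phiv: "N > 0 \<Longrightarrow> vnorm2 (phiv N) = 1"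
proof -
  assume N: "N > 0"
  have "vnorm2 (phiv N) = (\<Sum>a<N. \<Sum>c<N. (cmod (phiv N $ (a*N+c)))^2)"
    unfolding vnorm2_def dim_phiv by (rule sum_split_mult)
  also have "\<dots> = (\<Sum>a<N. \<Sum>c<N. if c = a then 1 / real N else 0)"
    using N by (intro sum.cong refl) (auto simp: phiv_entry norm_divide power_divide)
  also have "\<dots> = 1" using N by simp
  finally show ?thesis .
qed

lemma vnorm2_e0v: "N > 0 \<Longrightarrow> vnorm2 (e0v N) = 1"
proof -
  assume N: "N > 0"
  have "vnorm2 (e0v N) = (\<Sum>i<N. if i = 0 then 1 else 0)"
    unfolding vnorm2_def e0v_def by (intro sum.cong refl) auto
  also have "\<dots> = 1" using N by (simp add: sum.delta)
  finally show ?thesis .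
qed

lemma ip_e0v: "N > 0 \<Longrightarrow> ip (e0v N) (e0v N) = 1"
  using vnorm2_e0v ip_self by simp

lemma K1_entry:
  assumes U: "U \<in> carrier_mat N N" and v: "dim_vec v = N*N" and x: "x < N*N"
  shows "(kron U (1\<^sub>m N) *\<^sub>v v) $ x = (\<Sum>a<N. U $$ (x div N, a) * v $ (a*N + x mod N))"
proof -
  have N0: "N > 0" using x by (cases "N = 0") auto
  have xd: "x div N < N" "x mod N < N" using x N0 by (auto simp: div_less_iff_less_mult)
  have "(kron U (1\<^sub>m N) *\<^sub>v v) $ x = (\<Sum>j<N*N. kron U (1\<^sub>m N) $$ (x,j) * v $ j)"
    using U v x by (intro mult_mat_vec_sum) (auto simp: kron_def)
  also have "\<dots> = (\<Sum>a<N. \<Sum>c<N. kron U (1\<^sub>m N) $$ (x,a*N+c) * v $ (a*N+c))"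
    by (rule sum_split_mult)
  also have "\<dots> = (\<Sum>a<N. \<Sum>c<N. if c = x mod N then U $$ (x div N, a) * v $ (a*N + x mod N) else 0)"
  proof (intro sum.cong refl)
    fix a c assume a: "a \<in> {..<N}" and c: "c \<in> {..<N}"
    have ac: "a*N+c < N*N" using a c lt_mult_add[of a N c N] by auto
    have "(a*N+c) div N = a" "(a*N+c) mod N = c" using c by auto
    then show "kron U (1\<^sub>m N) $$ (x,a*N+c) * v $ (a*N+c) =
      (if c = x mod N then U $$ (x div N, a) * v $ (a*N + x mod N) else 0)"
      using x ac U xd c by (auto simp: kron_def)
  qed
  also have "\<dots> = (\<Sum>a<N. U $$ (x div N, a) * v $ (a*N + x mod N))"
    using xd by (simp add: sum.delta)
  finally show ?thesis .
qed

definition wv :: "complex mat \<Rightarrow> nat \<Rightarrow> complex Matrix.vec" where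
  "wv U N = kron U (1\<^sub>m N) *\<^sub>v (pm (N*N) (shf N N) *\<^sub>v (kron U (1\<^sub>m N) *\<^sub>v phiv N))"

lemma ip_phiv_wv:
  assumes U: "U \<in> carrier_mat N N" and N: "N > 0"
  shows "ip (phiv N) (wv U N) = (\<Sum>a<N. \<Sum>i<N. U $$ (a,i) * U $$ (a,i)) / of_nat N"
proof -
  define c where "c = complex_of_real (1 / sqrt (real N))"
  have cc: "c * c = 1 / of_nat N" unfolding c_def using N
    by (simp flip: of_real_mult)
  define v1 where "v1 = kron U (1\<^sub>m N) *\<^sub>v phiv N"
  have dv1: "dim_vec v1 = N*N" unfolding v1_def using U by (simp add: kron_def)
  have v1: "v1 $ x = c * U $$ (x div N, x mod N)" if x: "x < N*N" for x
  proof -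
    have xd: "x div N < N" "x mod N < N" using x N by (auto simp: div_less_iff_less_mult)
    have "v1 $ x = (\<Sum>a<N. U $$ (x div N, a) * phiv N $ (a*N + x mod N))"
      unfolding v1_def using K1_entry[OF U _ x] by simp
    also have "\<dots> = (\<Sum>a<N. if a = x mod N then c * U $$ (x div N, x mod N) else 0)"
      using xd by (intro sum.cong refl) (auto simp: phiv_entry c_def)
    also have "\<dots> = c * U $$ (x div N, x mod N)" using xd by (simp add: sum.delta)
    finally show ?thesis .
  qed
  define v2 where "v2 = pm (N*N) (shf N N) *\<^sub>v v1"
  have v2v: "v2 = Matrix.vec (N*N) (\<lambda>x. v1 $ shf N N x)"
    unfolding v2_def using shf_lt dv1 by (intro pm_vec) auto
  have dv2: "dim_vec v2 = N*N" unfolding v2v by simp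
  have v2: "v2 $ x = c * U $$ (x mod N, x div N)" if x: "x < N*N" for x
  proof -
    have xd: "x div N < N" "x mod N < N" using x N by (auto simp: div_less_iff_less_mult)
    have "shf N N x div N = x mod N" "shf N N x mod N = x div N" unfolding shf_def using xd by auto
    then show ?thesis unfolding v2v using x v1[OF shf_lt[OF x]] by simp
  qed
  have w: "wv U N $ x = c * (\<Sum>a<N. U $$ (x div N, a) * U $$ (x mod N, a))" if x: "x < N*N" for x
  proof -
    have xd: "x div N < N" "x mod N < N" using x N by (auto simp: div_less_iff_less_mult)
    have "wv U N $ x = (\<Sum>a<N. U $$ (x div N, a) * v2 $ (a*N + x mod N))"
      unfolding wv_def v1_def[symmetric] v2_def[symmetric] using K1_entry[OF U dv2 x] .
    also have "\<dots> = (\<Sum>a<N. c * (U $$ (x div N, a) * U $$ (x mod N, a)))"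
    proof (intro sum.cong refl)
      fix a assume a: "a \<in> {..<N}"
      have ax: "a*N + x mod N < N*N" using a xd lt_mult_add[of a N "x mod N" N] by auto
      have "(a*N + x mod N) mod N = x mod N" "(a*N + x mod N) div N = a" using xd by auto
      then show "U $$ (x div N, a) * v2 $ (a*N + x mod N) = c * (U $$ (x div N, a) * U $$ (x mod N, a))"
        using v2[OF ax] by simp
    qed
    finally show ?thesis by (simp add: sum_distrib_left)
  qed
  have dw: "dim_vec (wv U N) = N*N" unfolding wv_def using U by (simp add: kron_def)
  have "ip (phiv N) (wv U N) = (\<Sum>a<N. \<Sum>b<N. cnj (phiv N $ (a*N+b)) * wv U N $ (a*N+b))"
    unfolding ip_def dim_phiv by (rule sum_split_mult)
  also have "\<dots> = (\<Sum>a<N. \<Sum>b<N. if b = a then c * c * (\<Sum>i<N. U $$ (a,i) * U $$ (a,i)) else 0)"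
  proof (intro sum.cong refl)
    fix a b assume a: "a \<in> {..<N}" and b: "b \<in> {..<N}"
    have ab: "a*N+b < N*N" using a b lt_mult_add[of a N b N] by auto
    have "(a*N+b) div N = a" "(a*N+b) mod N = b" using b by auto
    moreover have "cnj c = c" unfolding c_def by simp
    moreover have "phiv N $ (a*N+b) = (if a = b then c else 0)" using a b phiv_entry[of a N b] unfolding c_def by simp
    ultimately show "cnj (phiv N $ (a*N+b)) * wv U N $ (a*N+b) =
        (if b = a then c * c * (\<Sum>i<N. U $$ (a,i) * U $$ (a,i)) else 0)"
      using a b w[OF ab] by auto
  qed
  also have "\<dots> = c * c * (\<Sum>a<N. \<Sum>i<N. U $$ (a,i) * U $$ (a,i))"
    by (simp add: sum.delta sum_distrib_left)
  finally show ?thesis using cc by simp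
qed



definition qq :: "nat \<Rightarrow> nat \<Rightarrow> nat" where "qq N k = N * (N*N)^(k-1)"
definition Dm :: "nat \<Rightarrow> nat \<Rightarrow> nat" where "Dm N k = N * (N*N)^k"

definition opsf :: "nat \<Rightarrow> nat \<Rightarrow> nat \<Rightarrow> complex mat" where
  "opsf N k t = (if t = 0 then 1\<^sub>m (Dm N k)
     else if odd t then pm (Dm N k) (liftf (shf N N) (qq N k))
     else pm (Dm N k) (shf (N*N) (qq N k)))"

definition alg :: "nat \<Rightarrow> nat \<Rightarrow> qalg" where
  "alg N k = \<lparr>nqueries = 2*k, anc_dim = (N*N)^k,
     init_state = kronv (pw (phiv N) k) (kronv (e0v N) unitv),
     ops = opsf N k,
     acc_proj = proj (kronv unitv (kronv (e0v N) (pw (phiv N) k)))\<rparr>"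

lemma Dm_qq: "k \<ge> 1 \<Longrightarrow> Dm N k = (N*N) * qq N k"
  unfolding Dm_def qq_def by (cases k) (auto simp: algebra_simps)

lemma anc_qq: "k \<ge> 1 \<Longrightarrow> (N*N)^k = N * qq N k"
  unfolding qq_def by (cases k) (auto simp: algebra_simps)

lemma qq_pos: "N > 0 \<Longrightarrow> qq N k > 0" unfolding qq_def by simp

lemma dimX: "j < k \<Longrightarrow> (N*N)^(k - Suc j) * (N * (N*N)^j) = qq N k"
proof -
  assume j: "j < k"
  have "(N*N)^(k - Suc j) * (N * (N*N)^j) = N * ((N*N)^(k - Suc j) * (N*N)^j)" by (simp add: algebra_simps)
  also have "(N*N)^(k - Suc j) * (N*N)^j = (N*N)^(k - Suc j + j)" by (simp add: power_add)
  also have "k - Suc j + j = k - 1" using j by simp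
  finally show ?thesis unfolding qq_def .
qed

lemma run_inv:
  assumes U: "U \<in> carrier_mat N N" and N: "N > 0" and j: "j \<le> k"
  shows "run_state (alg N k) U (2*j) = kronv (pw (phiv N) (k-j)) (kronv (e0v N) (pw (wv U N) j))"
  using j
proof (induction j)
  case 0
  have d: "dim_vec (kronv (pw (phiv N) k) (kronv (e0v N) unitv)) = Dm N k"
    by (simp add: Dm_def unitv_def mult.commute)
  have "run_state (alg N k) U 0 = 1\<^sub>m (Dm N k) *\<^sub>v kronv (pw (phiv N) k) (kronv (e0v N) unitv)"
    unfolding run_state.simps(1) by (simp add: alg_def opsf_def del: one_mult_mat_vec)
  also have "\<dots> = kronv (pw (phiv N) k) (kronv (e0v N) unitv)"
    by (rule one_mult_mat_vec) (use d in \<open>simp only: carrier_vec_def mem_Collect_eq\<close>)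
  finally show ?case by (simp only: mult_0_right diff_zero pw.simps(1))
next
  case (Suc j)
  then have jk: "j < k" and k1: "k \<ge> 1" by auto
  have IH: "run_state (alg N k) U (2*j) = kronv (pw (phiv N) (k-j)) (kronv (e0v N) (pw (wv U N) j))"
    using Suc by simp
  define q where "q = qq N k"
  define w where "w = wv U N"
  define K1 where "K1 = kron U (1\<^sub>m N)"
  have K1: "K1 \<in> carrier_mat (N*N) (N*N)" unfolding K1_def using U by (simp add: kron_def)
  define X where "X = kronv (pw (phiv N) (k - Suc j)) (kronv (e0v N) (pw w j))"
  have dw: "dim_vec w = N*N" unfolding w_def wv_def using U by (simp add: kron_def)
  have dX: "dim_vec X = q" unfolding X_def q_def using dimX[OF jk, of N] dw by (simp add: power_mult_distrib)
  have kj: "k - j = Suc (k - Suc j)" using jk by simp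
  have st: "run_state (alg N k) U (2*j) = kronv (phiv N) X"
    unfolding IH kj X_def w_def by (simp add: kronv_assoc)
  have q0: "q > 0" unfolding q_def using qq_pos[OF N] .
  have anc: "anc_dim (alg N k) = N * q" unfolding q_def alg_def using anc_qq[OF k1] by simp
  have Q: "kron U (1\<^sub>m (anc_dim (alg N k))) *\<^sub>v kronv v X = kronv (K1 *\<^sub>v v) X" if v: "dim_vec v = N*N" for v
  proof -
    have "kron U (1\<^sub>m (anc_dim (alg N k))) = kron K1 (1\<^sub>m q)"
      unfolding anc K1_def using kron_one_assoc[OF U q0] .
    then show ?thesis using kron_one_vec[OF K1 v dX] by simp
  qed
  have D: "Dm N k = (N*N) * q" unfolding q_def using Dm_qq[OF k1] .
  have o1: "ops (alg N k) (Suc (2*j)) = pm ((N*N) * q) (liftf (shf N N) q)"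
    unfolding alg_def opsf_def D q_def by simp
  have o2: "ops (alg N k) (Suc (Suc (2*j))) = pm ((N*N) * q) (shf (N*N) q)"
    unfolding alg_def opsf_def D q_def by simp
  have fsh: "\<And>x. x < N*N \<Longrightarrow> shf N N x < N*N" using shf_lt by blast
  have dK1: "dim_vec (K1 *\<^sub>v v) = N*N" for v using K1 by simp
  have dpm: "dim_vec (pm (N*N) (shf N N) *\<^sub>v v) = N*N" for v by (simp add: pm_def)
  have "run_state (alg N k) U (Suc (2*j)) = kronv (pm (N*N) (shf N N) *\<^sub>v (K1 *\<^sub>v phiv N)) X"
    using st Q[of "phiv N"] o1 liftf_kronv[OF fsh dK1 dX] by simp
  then have "run_state (alg N k) U (Suc (Suc (2*j))) = pm ((N*N) * q) (shf (N*N) q) *\<^sub>v kronv w X"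
    using Q[OF dpm] o2 unfolding w_def wv_def K1_def by simp
  also have "\<dots> = kronv X w" using shf_kronv[of w "N*N" X q] dX unfolding w_def wv_def using U
    by (simp add: kron_def)
  also have "\<dots> = kronv (pw (phiv N) (k - Suc j)) (kronv (e0v N) (pw w (Suc j)))"
    unfolding X_def pw_Suc_right by (simp add: kronv_assoc)
  finally show ?case unfolding w_def by simp
qed



lemma adj_one: "adj (1\<^sub>m n) = (1\<^sub>m n :: complex mat)"
  by (rule eq_matI) (auto simp: adj_def)

lemma unitary_one: "unitary_mat n (1\<^sub>m n)"
  unfolding unitary_mat_def adj_one by simp

lemma accept_alg:
  assumes U: "U \<in> carrier_mat N N" and N: "N > 0"
  shows "accept_prob (alg N k) U = (cmod (ip (phiv N) (wv U N))) ^ (2*k)"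
proof -
  define w where "w = wv U N"
  have dw: "dim_vec w = N*N" unfolding w_def wv_def using U by (simp add: kron_def)
  have fin: "run_state (alg N k) U (nqueries (alg N k)) = kronv unitv (kronv (e0v N) (pw w k))"
    using run_inv[OF U N, of k k] unfolding w_def by (simp add: alg_def)
  define chi where "chi = kronv unitv (kronv (e0v N) (pw (phiv N) k))"
  have dims: "dim_vec (kronv unitv (kronv (e0v N) (pw w k))) = dim_vec chi"
    unfolding chi_def using dw by simp
  have "accept_prob (alg N k) U = vnorm2 (proj chi *\<^sub>v kronv unitv (kronv (e0v N) (pw w k)))"
    unfolding accept_prob_def fin by (simp add: alg_def chi_def)
  also have "\<dots> = (cmod (ip chi (kronv unitv (kronv (e0v N) (pw w k)))))^2 * vnorm2 chi"
    by (rule vnorm2_proj[OF dims])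
  also have "vnorm2 chi = 1" unfolding chi_def
    using N by (simp add: vnorm2_kronv vnorm2_unitv vnorm2_e0v vnorm2_pw vnorm2_phiv)
  also have "ip chi (kronv unitv (kronv (e0v N) (pw w k))) = (ip (phiv N) w) ^ k"
    unfolding chi_def using dw N by (simp add: ip_kronv ip_unitv ip_e0v ip_pw)
  finally show ?thesis unfolding w_def by (simp add: norm_power power_mult[symmetric] mult.commute)
qed

lemma valid_alg:
  assumes N: "N > 0"
  shows "valid_qalg N (alg N k)"
proof -
  have anc: "anc_dim (alg N k) = (N*N)^k" by (simp add: alg_def)
  have D: "N * anc_dim (alg N k) = Dm N k" unfolding anc Dm_def ..
  have a1: "anc_dim (alg N k) \<ge> 1" unfolding anc using N by simp
  have dinit: "dim_vec (init_state (alg N k)) = Dm N k"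
    by (simp add: alg_def Dm_def unitv_def mult.commute)
  have ninit: "vnorm2 (init_state (alg N k)) = 1"
    using N by (simp add: alg_def vnorm2_kronv vnorm2_unitv vnorm2_e0v vnorm2_pw vnorm2_phiv)
  have ops: "unitary_mat (Dm N k) (ops (alg N k) t)" if t: "t \<le> nqueries (alg N k)" for t
  proof (cases "t = 0")
    case True then show ?thesis by (simp add: alg_def opsf_def unitary_one)
  next
    case False
    then have k1: "k \<ge> 1" using t by (simp add: alg_def)
    have DD: "Dm N k = (N*N) * qq N k" using Dm_qq[OF k1] .
    show ?thesis
    proof (cases "odd t")
      case True
      have "unitary_mat ((N*N) * qq N k) (pm ((N*N) * qq N k) (liftf (shf N N) (qq N k)))"
        by (intro pm_unitary liftf_bij shf_bij)
      then show ?thesis using False True DD by (simp add: alg_def opsf_def)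
    next
      case ev: False
      have "unitary_mat ((N*N) * qq N k) (pm ((N*N) * qq N k) (shf (N*N) (qq N k)))"
        by (intro pm_unitary shf_bij)
      then show ?thesis using False ev DD by (simp add: alg_def opsf_def)
    qed
  qed
  define chi where "chi = kronv unitv (kronv (e0v N) (pw (phiv N) k))"
  have acc: "acc_proj (alg N k) = proj chi" by (simp add: alg_def chi_def)
  have dchi: "dim_vec chi = Dm N k" by (simp add: chi_def Dm_def unitv_def mult.commute)
  have nchi: "vnorm2 chi = 1" unfolding chi_def
    using N by (simp add: vnorm2_kronv vnorm2_unitv vnorm2_e0v vnorm2_pw vnorm2_phiv)
  have pc: "proj chi \<in> carrier_mat (Dm N k) (Dm N k)" using dchi by (simp add: proj_def)
  have ic: "init_state (alg N k) \<in> carrier_vec (Dm N k)" by (simp only: carrier_vec_def mem_Collect_eq dinit)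
  show ?thesis unfolding valid_qalg_def D acc
  proof (intro conjI allI impI)
    show "1 \<le> anc_dim (alg N k)" by (rule a1)
    show "init_state (alg N k) \<in> carrier_vec (Dm N k)" by (rule ic)
    show "vnorm2 (init_state (alg N k)) = 1" by (rule ninit)
    fix t assume "t \<le> nqueries (alg N k)"
    then show "unitary_mat (Dm N k) (ops (alg N k) t)" by (rule ops)
  next
    show "proj chi \<in> carrier_mat (Dm N k) (Dm N k)" by (rule pc)
    show "proj chi * proj chi = proj chi" by (rule proj_idem[OF nchi])
    show "adj (proj chi) = proj chi" by (rule proj_herm)
  qed
qed



lemma exp_m4: "exp (-4::real) \<le> 1/3"
proof -
  have "1 + 4 \<le> exp (4::real)" using exp_ge_add_one_self[of 4] by simp
  then have "3 \<le> exp (4::real)" by simp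
  then show ?thesis by (simp add: exp_minus field_simps)
qed

lemma power_bound:
  fixes x e :: real and k :: nat
  assumes x0: "0 \<le> x" and xe: "x \<le> 1 - 2 * e^2" and k: "1 / e^2 \<le> real k" and e: "e > 0"
  shows "x ^ (2*k) \<le> 1/3"
proof -
  have b0: "0 \<le> 1 - 2 * e^2" using x0 xe by linarith
  have "x ^ (2*k) \<le> (1 - 2 * e^2) ^ (2*k)" using x0 xe by (intro power_mono)
  also have "\<dots> \<le> (exp (- 2 * e^2)) ^ (2*k)"
    using b0 exp_ge_add_one_self[of "- 2 * e^2"] by (intro power_mono) auto
  also have "\<dots> = exp (real (2*k) * (- 2 * e^2))" by (rule exp_of_nat_mult[symmetric])
  also have "\<dots> \<le> exp (-4)"
  proof -
    have "1 \<le> real k * e^2" using k e by (simp add: field_simps)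
    then have "real (2*k) * (- 2 * e^2) \<le> -4" by simp
    then show ?thesis by simp
  qed
  also have "\<dots> \<le> 1/3" by (rule exp_m4)
  finally show ?thesis .
qed

theorem theorem1:
  shows "\<exists>c::real. \<forall>n::nat. n \<ge> 1 \<longrightarrow> (\<forall>\<epsilon>::real. \<epsilon> > 0 \<longrightarrow>
           (\<exists>A. eps_tests (2^n) \<epsilon> (orth_group (2^n)) A \<and> real (nqueries A) \<le> c / \<epsilon>\<^sup>2))"
proof (intro exI[of _ 3] allI impI)
  fix n :: nat and \<epsilon> :: real
  assume n: "n \<ge> 1" and eps: "\<epsilon> > 0"
  define N :: nat where "N = 2^n"
  have N: "N > 0" unfolding N_def by simp
  define k where "k = (if \<epsilon>^2 > 1/2 then 0 else nat \<lceil>1 / \<epsilon>^2\<rceil>)"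
  have tests: "eps_tests N \<epsilon> (orth_group N) (alg N k)"
    unfolding eps_tests_def
  proof (intro conjI allI impI valid_alg[OF N])
    fix U assume U: "unitary_mat N U"
    have Uc: "U \<in> carrier_mat N N" using U unfolding unitary_mat_def by auto
    define s where "s = (\<Sum>a<N. \<Sum>i<N. U $$ (a,i) * U $$ (a,i))"
    have acc: "accept_prob (alg N k) U = (cmod s / real N) ^ (2*k)"
      using accept_alg[OF Uc N, of k] ip_phiv_wv[OF Uc N] unfolding s_def by (simp add: norm_divide)
    {
      assume P: "has_property N (orth_group N) U"
      have "cmod s = real N" using prop_s[OF P] unfolding s_def .
      then show "accept_prob (alg N k) U \<ge> 2/3" using acc N by simp
    }
    {
      assume F: "eps_far N \<epsilon> (orth_group N) U"
      have cs: "cmod s \<le> real N * (1 - 2 * \<epsilon>^2)" using far_bound[OF U N eps F] unfolding s_def .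
      define x where "x = cmod s / real N"
      have x0: "0 \<le> x" unfolding x_def by simp
      have xe: "x \<le> 1 - 2 * \<epsilon>^2" unfolding x_def using cs N by (simp add: divide_le_eq mult.commute)
      show "accept_prob (alg N k) U \<le> 1/3"
      proof (cases "\<epsilon>^2 > 1/2")
        case True
        then show ?thesis using x0 xe by linarith
      next
        case False
        then have kk: "k = nat \<lceil>1 / \<epsilon>^2\<rceil>" unfolding k_def by simp
        have "1 / \<epsilon>^2 \<le> real k" unfolding kk by linarith
        then show ?thesis unfolding acc x_def[symmetric] using power_bound[OF x0 xe _ eps] by simp
      qed
    }
  qed
  have q: "real (nqueries (alg N k)) \<le> 3 / \<epsilon>^2"
  proof (cases "\<epsilon>^2 > 1/2")
    case True then show ?thesis unfolding k_def by (simp add: alg_def)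
  next
    case False
    have e2: "\<epsilon>^2 > 0" using eps by simp
    have inv: "2 \<le> 1 / \<epsilon>^2" using False e2 by (simp add: field_simps)
    have kk: "k = nat \<lceil>1 / \<epsilon>^2\<rceil>" unfolding k_def using False by simp
    have "real k \<le> 1 / \<epsilon>^2 + 1" unfolding kk using inv by linarith
    then have "real (nqueries (alg N k)) \<le> 2 * (1 / \<epsilon>^2 + 1)" by (simp add: alg_def)
    also have "\<dots> \<le> 3 / \<epsilon>^2" using inv by (simp add: field_simps)
    finally show ?thesis .
  qed
  show "\<exists>A. eps_tests (2^n) \<epsilon> (orth_group (2^n)) A \<and> real (nqueries A) \<le> 3 / \<epsilon>\<^sup>2"
    using tests q unfolding N_def by blast
qed


end
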